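(* Let $\Gamma$ be a finite connected tetravalent $G$-half-arc-transitive graph for some $G\le\mathrm{Aut}(\Gamma)$ with $\mathrm{rad}_G(\Gamma)=3$ and $\mathrm{att}_G(\Gamma)=2$, and let $\Lambda=\mathrm{Alt}_G(\Gamma)$. Then the group $G$ induces an action on $\Lambda$ which is transitive on the $2$-arcs of $\Lambda$, and $\mathrm{Dart}(\Lambda)\cong\Gamma$. In fact, there is an isomorphism $\Psi\colon\mathrm{Dart}(\Lambda)\to\Gamma$ mapping the natural orientation of $\mathrm{Dart}(\Lambda)$ to one of the two $G$-induced orientations of $\Gamma$.
   Context: All graphs are finite and simple. For a tetravalent graph $\Gamma$ and $G\le \mathrm{Aut}(\Gamma)$, $\Gamma$ is $G$-half-arc-transitive if $G$ acts transitively on vertices and edges but not on arcs; then the two $G$-orbits on arcs give two paired ($G$-induced) orientations of the edges, and each vertex is the tail of two and head of two incident edges. A $G$-alternating cycle is a cycle in which every two consecutive edges have a common head or a common tail. All have length $2\,\mathrm{rad}_G(\Gamma)$, and any two sharing a vertex meet in $\mathrm{att}_G(\Gamma)$ vertices. $\mathrm{Alt}_G(\Gamma)$ is the graph whose vertices are the $G$-alternating cycles, two adjacent iff they share a vertex; $G$ acts on it naturally. A $2$-arc is a walk $(x,y,z)$ with $x\ne z$. For a cubic graph $\Lambda$, $\mathrm{Dart}(\Lambda)$ has as vertices the arcs of $\Lambda$, with $(u,v)$ adjacent to $(u',v')$ iff either $u'=v$ and $u\neq v'$, or $u=v'$ and $u'\neq v$; its natural orientation orients the edge $(u,v)(v,w)$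 from $(u,v)$ to $(v,w)$. *)

theory Defs
  imports "HOL-Algebra.Bij"
begin

definition simple_graph :: "'a set \<Rightarrow> ('a \<Rightarrow> 'a \<Rightarrow> bool) \<Rightarrow> bool" where
  "simple_graph V E \<longleftrightarrow> finite V \<and> (\<forall>x y. E x y \<longrightarrow> x \<in> V \<and> y \<in> V \<and> x \<noteq> y \<and> E y x)"

definition connected_graph :: "'a set \<Rightarrow> ('a \<Rightarrow> 'a \<Rightarrow> bool) \<Rightarrow> bool" where
  "connected_graph V E \<longleftrightarrow> (\<forall>u\<in>V. \<forall>v\<in>V. E\<^sup>*\<^sup>* u v)"

definition tetravalent :: "'a set \<Rightarrow> ('a \<Rightarrow> 'a \<Rightarrow> bool) \<Rightarrow> bool" where
  "tetravalent V E \<longleftrightarrow> (\<forall>v\<in>V. card {u. E v u} = 4)"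

definition graph_edges :: "('a \<Rightarrow> 'a \<Rightarrow> bool) \<Rightarrow> 'a set set" where
  "graph_edges E = {{u, v} | u v. E u v}"

definition graph_arcs :: "('a \<Rightarrow> 'a \<Rightarrow> bool) \<Rightarrow> ('a \<times> 'a) set" where
  "graph_arcs E = {(u, v). E u v}"

text \<open>G is a subgroup of Aut(V,E); permutations are represented as elements of BijGroup V
  (bijections of V, extensional outside V).\<close>
definition aut_subgroup :: "('a \<Rightarrow> 'a) set \<Rightarrow> 'a set \<Rightarrow> ('a \<Rightarrow> 'a \<Rightarrow> bool) \<Rightarrow> bool" where
  "aut_subgroup G V E \<longleftrightarrow> subgroup G (BijGroup V) \<and>
     (\<forall>g\<in>G. \<forall>x\<in>V. \<forall>y\<in>V. E x y \<longleftrightarrow> E (g x) (g y))"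

definition half_arc_transitive :: "('a \<Rightarrow> 'a) set \<Rightarrow> 'a set \<Rightarrow> ('a \<Rightarrow> 'a \<Rightarrow> bool) \<Rightarrow> bool" where
  "half_arc_transitive G V E \<longleftrightarrow>
     (\<forall>u\<in>V. \<forall>v\<in>V. \<exists>g\<in>G. g u = v) \<and>
     (\<forall>e\<in>graph_edges E. \<forall>f\<in>graph_edges E. \<exists>g\<in>G. g ` e = f) \<and>
     \<not> (\<forall>a\<in>graph_arcs E. \<forall>b\<in>graph_arcs E. \<exists>g\<in>G. g (fst a) = fst b \<and> g (snd a) = snd b)"

text \<open>The G-orbit of an arc; the G-induced orientations are the G-orbits on arcs.
  An arc (u,v) in an orientation O means the edge is oriented from tail u to head v.\<close>
definition arc_orbit :: "('a \<Rightarrow> 'a) set \<Rightarrow> 'a \<times> 'a \<Rightarrow> ('a \<times> 'a) set" where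
  "arc_orbit G a = {(g (fst a), g (snd a)) | g. g \<in> G}"

definition G_orientation :: "('a \<Rightarrow> 'a) set \<Rightarrow> 'a set \<Rightarrow> ('a \<Rightarrow> 'a \<Rightarrow> bool) \<Rightarrow> ('a \<times> 'a) set \<Rightarrow> bool" where
  "G_orientation G V E Ori \<longleftrightarrow> (\<exists>a\<in>graph_arcs E. Ori = arc_orbit G a)"

text \<open>A fixed one of the two G-induced orientations (alternating cycles do not depend on the choice).\<close>
definition some_orientation :: "('a \<Rightarrow> 'a) set \<Rightarrow> ('a \<Rightarrow> 'a \<Rightarrow> bool) \<Rightarrow> ('a \<times> 'a) set" where
  "some_orientation G E = arc_orbit G (SOME a. a \<in> graph_arcs E)"

definition is_cycle :: "'a set \<Rightarrow> ('a \<Rightarrow> 'a \<Rightarrow> bool) \<Rightarrow> 'a list \<Rightarrow> bool" where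
  "is_cycle V E xs \<longleftrightarrow> distinct xs \<and> length xs \<ge> 3 \<and> set xs \<subseteq> V \<and>
     (\<forall>i < length xs. E (xs ! i) (xs ! ((i + 1) mod length xs)))"

definition cycle_edges :: "'a list \<Rightarrow> 'a set set" where
  "cycle_edges xs = {{xs ! i, xs ! ((i + 1) mod length xs)} | i. i < length xs}"

definition alternating :: "('a \<times> 'a) set \<Rightarrow> 'a list \<Rightarrow> bool" where
  "alternating Ori xs \<longleftrightarrow> (let n = length xs in \<forall>i < n.
     let a = xs ! i; b = xs ! ((i + 1) mod n); c = xs ! ((i + 2) mod n) in
       ((a, b) \<in> Ori \<and> (c, b) \<in> Ori) \<or> ((b, a) \<in> Ori \<and> (b, c) \<in> Ori))"

text \<open>The G-alternating cycles, each identified with its edge set.\<close>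
definition alt_cycles :: "('a \<Rightarrow> 'a) set \<Rightarrow> 'a set \<Rightarrow> ('a \<Rightarrow> 'a \<Rightarrow> bool) \<Rightarrow> 'a set set set" where
  "alt_cycles G V E = {cycle_edges xs | xs. is_cycle V E xs \<and> alternating (some_orientation G E) xs}"

definition cycle_vertices :: "'a set set \<Rightarrow> 'a set" where
  "cycle_vertices C = \<Union> C"

definition has_radius :: "('a \<Rightarrow> 'a) set \<Rightarrow> 'a set \<Rightarrow> ('a \<Rightarrow> 'a \<Rightarrow> bool) \<Rightarrow> nat \<Rightarrow> bool" where
  "has_radius G V E r \<longleftrightarrow> (\<forall>C\<in>alt_cycles G V E. card C = 2 * r)"

definition has_attachment :: "('a \<Rightarrow> 'a) set \<Rightarrow> 'a set \<Rightarrow> ('a \<Rightarrow> 'a \<Rightarrow> bool) \<Rightarrow> nat \<Rightarrow> bool" where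
  "has_attachment G V E a \<longleftrightarrow> (\<forall>C\<in>alt_cycles G V E. \<forall>D\<in>alt_cycles G V E.
     C \<noteq> D \<and> cycle_vertices C \<inter> cycle_vertices D \<noteq> {} \<longrightarrow>
       card (cycle_vertices C \<inter> cycle_vertices D) = a)"

definition alt_adj :: "('a \<Rightarrow> 'a) set \<Rightarrow> 'a set \<Rightarrow> ('a \<Rightarrow> 'a \<Rightarrow> bool) \<Rightarrow> 'a set set \<Rightarrow> 'a set set \<Rightarrow> bool" where
  "alt_adj G V E C D \<longleftrightarrow> C \<in> alt_cycles G V E \<and> D \<in> alt_cycles G V E \<and> C \<noteq> D \<and>
     cycle_vertices C \<inter> cycle_vertices D \<noteq> {}"

definition cyc_act :: "('a \<Rightarrow> 'a) \<Rightarrow> 'a set set \<Rightarrow> 'a set set" where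
  "cyc_act g C = (\<lambda>e. g ` e) ` C"

definition two_arc :: "('b \<Rightarrow> 'b \<Rightarrow> bool) \<Rightarrow> 'b \<Rightarrow> 'b \<Rightarrow> 'b \<Rightarrow> bool" where
  "two_arc R x y z \<longleftrightarrow> R x y \<and> R y z \<and> x \<noteq> z"

definition dart_adj :: "('b \<Rightarrow> 'b \<Rightarrow> bool) \<Rightarrow> 'b \<times> 'b \<Rightarrow> 'b \<times> 'b \<Rightarrow> bool" where
  "dart_adj R x y \<longleftrightarrow> R (fst x) (snd x) \<and> R (fst y) (snd y) \<and>
     ((fst y = snd x \<and> fst x \<noteq> snd y) \<or> (fst x = snd y \<and> fst y \<noteq> snd x))"

definition dart_oriented :: "('b \<Rightarrow> 'b \<Rightarrow> bool) \<Rightarrow> 'b \<times> 'b \<Rightarrow> 'b \<times> 'b \<Rightarrow> bool" where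
  "dart_oriented R x y \<longleftrightarrow> R (fst x) (snd x) \<and> R (fst y) (snd y) \<and>
     fst y = snd x \<and> fst x \<noteq> snd y"

end

theory Submission
  imports Defs
begin


definition act :: "('a \<Rightarrow> 'a) \<Rightarrow> 'a \<times> 'a \<Rightarrow> 'a \<times> 'a" where
  "act g d = (g (fst d), g (snd d))"

locale hat =
  fixes V :: "'a set" and E :: "'a \<Rightarrow> 'a \<Rightarrow> bool" and G :: "('a \<Rightarrow> 'a) set"
  assumes sg: "simple_graph V E" and cn: "connected_graph V E" and tv: "tetravalent V E"
    and aut: "aut_subgroup G V E" and hat: "half_arc_transitive G V E"
    and rad: "has_radius G V E 3" and att: "has_attachment G V E 2"
begin

lemma finV: "finite V" using sg by (simp add: simple_graph_def)
lemma E_V: "E x y \<Longrightarrow> x \<in> V \<and> y \<in> V \<and> x \<noteq> y \<and> E y x"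
  using sg by (simp add: simple_graph_def)

lemma subg: "subgroup G (BijGroup V)" using aut by (simp add: aut_subgroup_def)

lemma gBij: "g \<in> G \<Longrightarrow> g \<in> Bij V"
  using subgroup.subset[OF subg] by (auto simp: BijGroup_def)

lemma g_bij: "g \<in> G \<Longrightarrow> bij_betw g V V" using gBij by (simp add: Bij_def)
lemma g_V: "g \<in> G \<Longrightarrow> x \<in> V \<Longrightarrow> g x \<in> V" using g_bij bij_betwE by blast
lemma g_inj: "g \<in> G \<Longrightarrow> x \<in> V \<Longrightarrow> y \<in> V \<Longrightarrow> g x = g y \<Longrightarrow> x = y"
  using g_bij by (metis bij_betw_imp_inj_on inj_onD)
lemma g_E: "g \<in> G \<Longrightarrow> E x y \<Longrightarrow> E (g x) (g y)"
proof -
  assume a: "g \<in> G" "E x y"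
  have "x \<in> V" "y \<in> V" using E_V[OF a(2)] by auto
  thus ?thesis using aut a unfolding aut_subgroup_def by blast
qed

lemma g_mult: assumes "g \<in> G" "h \<in> G" shows "\<exists>k\<in>G. \<forall>x\<in>V. k x = g (h x)"
proof -
  have "g \<otimes>\<^bsub>BijGroup V\<^esub> h \<in> G" using subgroup.m_closed[OF subg] assms by blast
  moreover have "\<forall>x\<in>V. (g \<otimes>\<^bsub>BijGroup V\<^esub> h) x = g (h x)"
    using gBij[OF assms(1)] gBij[OF assms(2)] by (simp add: BijGroup_def compose_def)
  ultimately show ?thesis by blast
qed

lemma g_inv: assumes "g \<in> G" shows "\<exists>k\<in>G. \<forall>x\<in>V. k (g x) = x"
proof -
  have "inv\<^bsub>BijGroup V\<^esub> g \<in> G" using subgroup.m_inv_closed[OF subg] assms by blast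
  moreover have "\<forall>x\<in>V. (inv\<^bsub>BijGroup V\<^esub> g) (g x) = x"
    using gBij[OF assms] g_V[OF assms] g_bij[OF assms]
    by (simp add: inv_BijGroup bij_betw_inv_into_left)
  ultimately show ?thesis by blast
qed

definition a0 :: "'a \<times> 'a" where "a0 = (SOME a. a \<in> graph_arcs E)"
definition Or :: "('a \<times> 'a) set" where "Or = some_orientation G E"

lemma arcs_ne: "graph_arcs E \<noteq> {}"
  using hat by (auto simp: half_arc_transitive_def)

lemma a0_arc: "E (fst a0) (snd a0)"
proof -
  have "a0 \<in> graph_arcs E" unfolding a0_def using arcs_ne by (metis some_in_eq)
  thus ?thesis by (auto simp: graph_arcs_def)
qed

lemma a0_V: "fst a0 \<in> V" "snd a0 \<in> V" using E_V[OF a0_arc] by auto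

lemma O_eq: "Or = {act g a0 | g. g \<in> G}"
  by (simp add: Or_def some_orientation_def arc_orbit_def a0_def act_def)

lemma O_E: "d \<in> Or \<Longrightarrow> E (fst d) (snd d)"
  using a0_arc g_E by (auto simp: O_eq act_def)

lemma O_E': "(x,y) \<in> Or \<Longrightarrow> E x y" using O_E by fastforce

lemma O_V: "(x,y) \<in> Or \<Longrightarrow> x \<in> V \<and> y \<in> V \<and> x \<noteq> y" using E_V[OF O_E'] by blast

lemma O_closed: assumes "g \<in> G" "d \<in> Or" shows "act g d \<in> Or"
proof -
  obtain h where h: "h \<in> G" "d = act h a0" using assms O_eq by auto
  obtain k where k: "k \<in> G" "\<forall>x\<in>V. k x = g (h x)" using g_mult[OF assms(1) h(1)] by blast
  have "act k a0 = act g d" using k h a0_V by (simp add: act_def)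
  thus ?thesis using k O_eq by auto
qed

lemma O_trans: assumes "d \<in> Or" "d' \<in> Or" shows "\<exists>g\<in>G. act g d = d'"
proof -
  obtain h where h: "h \<in> G" "d = act h a0" using assms O_eq by auto
  obtain h' where h': "h' \<in> G" "d' = act h' a0" using assms O_eq by auto
  obtain hi where hi: "hi \<in> G" "\<forall>x\<in>V. hi (h x) = x" using g_inv[OF h(1)] by blast
  obtain k where k: "k \<in> G" "\<forall>x\<in>V. k x = h' (hi x)" using g_mult[OF h'(1) hi(1)] by blast
  have "act k d = d'" using k h h' hi a0_V g_V[OF h(1)] by (simp add: act_def)
  thus ?thesis using k by blast
qed

lemma O_total: assumes "E x y" shows "(x,y) \<in> Or \<or> (y,x) \<in> Or"
proof -
  have e0: "{fst a0, snd a0} \<in> graph_edges E" using a0_arc by (auto simp: graph_edges_def)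
  have e1: "{x, y} \<in> graph_edges E" using assms by (auto simp: graph_edges_def)
  obtain g where g: "g \<in> G" "g ` {fst a0, snd a0} = {x,y}"
    using hat e0 e1 unfolding half_arc_transitive_def by blast
  have "act g a0 \<in> Or" using g O_eq by auto
  moreover have "act g a0 = (x,y) \<or> act g a0 = (y,x)"
  proof -
    have "{g (fst a0), g (snd a0)} = {x,y}" using g(2) by simp
    thus ?thesis by (auto simp: act_def doubleton_eq_iff)
  qed
  ultimately show ?thesis by auto
qed

lemma O_anti: assumes "(x,y) \<in> Or" shows "(y,x) \<notin> Or"
proof
  assume yx: "(y,x) \<in> Or"
  have all: "a \<in> Or" if aa: "a \<in> graph_arcs E" for a
  proof -
    obtain p q where a: "a = (p,q)" "E p q" using aa by (cases a) (auto simp: graph_arcs_def)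
    show ?thesis
    proof (cases "(p,q) \<in> Or")
      case True thus ?thesis using a by simp
    next
      case False
      hence qp: "(q,p) \<in> Or" using O_total[OF a(2)] by auto
      obtain g where g: "g \<in> G" "act g (x,y) = (q,p)" using O_trans[OF assms qp] by blast
      have "act g (y,x) \<in> Or" using O_closed[OF g(1) yx] .
      hence "(p,q) \<in> Or" using g(2) unfolding act_def by auto
      thus ?thesis using a(1) by simp
    qed
  qed
  have "\<forall>a\<in>graph_arcs E. \<forall>b\<in>graph_arcs E. \<exists>g\<in>G. g (fst a) = fst b \<and> g (snd a) = snd b"
  proof (intro ballI)
    fix a b assume "a \<in> graph_arcs E" "b \<in> graph_arcs E"
    then obtain g where "g \<in> G" "act g a = b" using all O_trans by blast
    thus "\<exists>g\<in>G. g (fst a) = fst b \<and> g (snd a) = snd b" by (auto simp: act_def)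
  qed
  moreover have "\<not> (\<forall>a\<in>graph_arcs E. \<forall>b\<in>graph_arcs E. \<exists>g\<in>G. g (fst a) = fst b \<and> g (snd a) = snd b)"
    using hat unfolding half_arc_transitive_def by blast
  ultimately show False by blast
qed


lemma vtrans: "u \<in> V \<Longrightarrow> v \<in> V \<Longrightarrow> \<exists>g\<in>G. g u = v"
  using hat unfolding half_arc_transitive_def by blast

definition outs :: "'a \<Rightarrow> 'a set" where "outs v = {w. (v,w) \<in> Or}"
definition ins :: "'a \<Rightarrow> 'a set" where "ins v = {w. (w,v) \<in> Or}"

lemma outs_V: "outs v \<subseteq> V" using O_V by (auto simp: outs_def)
lemma ins_V: "ins v \<subseteq> V" using O_V by (auto simp: ins_def)
lemma fin_outs: "finite (outs v)" using outs_V finV finite_subset by blast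
lemma fin_ins: "finite (ins v)" using ins_V finV finite_subset by blast

lemma nbrs: "{u. E v u} = outs v \<union> ins v"
proof -
  have "E v u \<longleftrightarrow> (v,u) \<in> Or \<or> (u,v) \<in> Or" for u
  proof
    assume "E v u" thus "(v,u) \<in> Or \<or> (u,v) \<in> Or" using O_total by blast
  next
    assume "(v,u) \<in> Or \<or> (u,v) \<in> Or"
    thus "E v u"
    proof
      assume "(u,v) \<in> Or" hence "E u v" by (rule O_E')
      thus "E v u" using E_V by blast
    qed (rule O_E')
  qed
  thus ?thesis by (auto simp: outs_def ins_def)
qed

lemma disj_oi: "outs v \<inter> ins v = {}" using O_anti by (auto simp: outs_def ins_def)

lemma card_oi: "v \<in> V \<Longrightarrow> card (outs v) + card (ins v) = 4"
proof -
  assume v: "v \<in> V"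
  have "card {u. E v u} = 4" using tv v by (simp add: tetravalent_def)
  thus ?thesis using nbrs disj_oi fin_outs fin_ins by (simp add: card_Un_disjoint)
qed

lemma outs_le: assumes "v \<in> V" "v' \<in> V" shows "card (outs v) \<le> card (outs v')"
proof -
  obtain g where g: "g \<in> G" "g v = v'" using vtrans assms by blast
  have "g ` outs v \<subseteq> outs v'"
  proof
    fix y assume "y \<in> g ` outs v"
    then obtain w where w: "(v,w) \<in> Or" "y = g w" by (auto simp: outs_def)
    have "act g (v,w) \<in> Or" using O_closed g w by blast
    thus "y \<in> outs v'" using g w by (simp add: act_def outs_def)
  qed
  moreover have "inj_on g (outs v)" using g_bij[OF g(1)] outs_V
    by (meson bij_betw_imp_inj_on inj_on_subset)
  ultimately show ?thesis using fin_outs card_inj_on_le by blast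
qed

lemma outs_const: "v \<in> V \<Longrightarrow> v' \<in> V \<Longrightarrow> card (outs v) = card (outs v')"
  using outs_le le_antisym by blast

lemma Or_V: "Or \<subseteq> V \<times> V" using O_V by auto

lemma card_Or_out: "card Or = (\<Sum>v\<in>V. card (outs v))"
proof -
  have "Or = Sigma V outs" using Or_V by (auto simp: outs_def)
  thus ?thesis using finV fin_outs by (simp add: card_SigmaI)
qed

lemma card_Or_in: "card Or = (\<Sum>v\<in>V. card (ins v))"
proof -
  have eq: "Or = (\<lambda>(x,y). (y,x)) ` Sigma V ins" using Or_V by (auto simp: ins_def image_iff)
  have "inj_on (\<lambda>(x::'a,y::'a). (y,x)) (Sigma V ins)" by (auto simp: inj_on_def)
  hence "card Or = card (Sigma V ins)" using eq card_image by metis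
  thus ?thesis using finV fin_ins by (simp add: card_SigmaI)
qed

lemma deg2: assumes "v \<in> V" shows "card (outs v) = 2" "card (ins v) = 2"
proof -
  define k where "k = card (outs v)"
  have ok: "\<forall>x\<in>V. card (outs x) = k" using outs_const assms k_def by blast
  have ik: "\<forall>x\<in>V. card (ins x) = 4 - k" using ok card_oi by (metis add_diff_cancel_left')
  have "card Or = card V * k" using card_Or_out ok by simp
  moreover have "card Or = card V * (4 - k)" using card_Or_in ik by simp
  moreover have "card V > 0" using assms finV card_gt_0_iff by blast
  ultimately have "k = 4 - k" by simp
  hence "k = 2" by simp
  thus "card (outs v) = 2" "card (ins v) = 2" using ok ik assms by auto
qed

definition oin :: "'a \<Rightarrow> 'a \<Rightarrow> 'a" where "oin w u = (SOME u'. (u',w) \<in> Or \<and> u' \<noteq> u)"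
definition oout :: "'a \<Rightarrow> 'a \<Rightarrow> 'a" where "oout u w = (SOME w'. (u,w') \<in> Or \<and> w' \<noteq> w)"

lemma oin: assumes "(u,w) \<in> Or"
  shows "(oin w u, w) \<in> Or" "oin w u \<noteq> u" "\<And>x. (x,w) \<in> Or \<Longrightarrow> x = u \<or> x = oin w u"
proof -
  have "card (ins w) = 2" using deg2 O_V assms by blast
  then obtain a b where ab: "ins w = {a,b}" "a \<noteq> b" by (auto simp: card_2_iff)
  have "\<exists>u'. (u',w) \<in> Or \<and> u' \<noteq> u" using ab assms by (auto simp: ins_def set_eq_iff)
  hence o: "(oin w u, w) \<in> Or \<and> oin w u \<noteq> u" unfolding oin_def by (rule someI_ex)
  thus "(oin w u, w) \<in> Or" "oin w u \<noteq> u" by auto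
  fix x assume "(x,w) \<in> Or"
  thus "x = u \<or> x = oin w u" using ab o assms by (auto simp: ins_def set_eq_iff)
qed

lemma oout: assumes "(u,w) \<in> Or"
  shows "(u, oout u w) \<in> Or" "oout u w \<noteq> w" "\<And>x. (u,x) \<in> Or \<Longrightarrow> x = w \<or> x = oout u w"
proof -
  have "card (outs u) = 2" using deg2 O_V assms by blast
  then obtain a b where ab: "outs u = {a,b}" "a \<noteq> b" by (auto simp: card_2_iff)
  have "\<exists>w'. (u,w') \<in> Or \<and> w' \<noteq> w" using ab assms by (auto simp: outs_def set_eq_iff)
  hence o: "(u, oout u w) \<in> Or \<and> oout u w \<noteq> w" unfolding oout_def by (rule someI_ex)
  thus "(u, oout u w) \<in> Or" "oout u w \<noteq> w" by auto
  fix x assume "(u,x) \<in> Or"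
  thus "x = w \<or> x = oout u w" using ab o assms by (auto simp: outs_def set_eq_iff)
qed

definition psi :: "'a \<times> 'a \<Rightarrow> 'a \<times> 'a" where "psi d = (oin (snd d) (fst d), snd d)"
definition chi :: "'a \<times> 'a \<Rightarrow> 'a \<times> 'a" where "chi d = (fst d, oout (fst d) (snd d))"

lemma psi_in: "d \<in> Or \<Longrightarrow> psi d \<in> Or" using oin(1)[of "fst d" "snd d"] by (simp add: psi_def)
lemma chi_in: "d \<in> Or \<Longrightarrow> chi d \<in> Or" using oout(1)[of "fst d" "snd d"] by (simp add: chi_def)
lemma psi_snd[simp]: "snd (psi d) = snd d" by (simp add: psi_def)
lemma chi_fst[simp]: "fst (chi d) = fst d" by (simp add: chi_def)
lemma psi_fst: "d \<in> Or \<Longrightarrow> fst (psi d) \<noteq> fst d" using oin(2)[of "fst d" "snd d"] by (simp add: psi_def)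
lemma chi_snd: "d \<in> Or \<Longrightarrow> snd (chi d) \<noteq> snd d" using oout(2)[of "fst d" "snd d"] by (simp add: chi_def)
lemma psi_char: "d \<in> Or \<Longrightarrow> (x, snd d) \<in> Or \<Longrightarrow> (x, snd d) = d \<or> (x, snd d) = psi d"
  using oin(3)[of "fst d" "snd d" x] by (auto simp: psi_def)
lemma chi_char: "d \<in> Or \<Longrightarrow> (fst d, x) \<in> Or \<Longrightarrow> (fst d, x) = d \<or> (fst d, x) = chi d"
  using oout(3)[of "fst d" "snd d" x] by (auto simp: chi_def)

lemma psi_char': "d \<in> Or \<Longrightarrow> e \<in> Or \<Longrightarrow> snd e = snd d \<Longrightarrow> e = d \<or> e = psi d"
  using psi_char[of d "fst e"] by (cases e) auto
lemma chi_char': "d \<in> Or \<Longrightarrow> e \<in> Or \<Longrightarrow> fst e = fst d \<Longrightarrow> e = d \<or> e = chi d"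
  using chi_char[of d "snd e"] by (cases e) auto

lemma psi_ne: "d \<in> Or \<Longrightarrow> psi d \<noteq> d" using psi_fst by metis
lemma chi_ne: "d \<in> Or \<Longrightarrow> chi d \<noteq> d" using chi_snd by metis

lemma psi_psi: assumes "d \<in> Or" shows "psi (psi d) = d"
proof -
  have p: "psi d \<in> Or" using psi_in assms .
  have "psi (psi d) \<in> Or" using psi_in p .
  moreover have "snd (psi (psi d)) = snd d" by simp
  ultimately have "psi (psi d) = d \<or> psi (psi d) = psi d" using psi_char' assms by blast
  thus ?thesis using psi_ne p by metis
qed

lemma chi_chi: assumes "d \<in> Or" shows "chi (chi d) = d"
proof -
  have p: "chi d \<in> Or" using chi_in assms .
  have "chi (chi d) \<in> Or" using chi_in p .
  moreover have "fst (chi (chi d)) = fst d" by simp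
  ultimately have "chi (chi d) = d \<or> chi (chi d) = chi d" using chi_char' assms by blast
  thus ?thesis using chi_ne p by metis
qed

lemma act_fst[simp]: "fst (act g d) = g (fst d)" and act_snd[simp]: "snd (act g d) = g (snd d)"
  by (simp_all add: act_def)

lemma psi_act: assumes "g \<in> G" "d \<in> Or" shows "act g (psi d) = psi (act g d)"
proof -
  have a: "act g (psi d) \<in> Or" using O_closed assms psi_in by blast
  have b: "act g d \<in> Or" using O_closed assms by blast
  have "act g (psi d) = act g d \<or> act g (psi d) = psi (act g d)"
    using psi_char'[OF b a] by simp
  moreover have "g (fst (psi d)) \<noteq> g (fst d)"
  proof
    assume "g (fst (psi d)) = g (fst d)"
    moreover have "fst (psi d) \<in> V" "fst d \<in> V" using O_V psi_in assms(2) by (metis prod.collapse)+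
    ultimately have "fst (psi d) = fst d" using g_inj assms(1) by blast
    thus False using psi_fst assms by blast
  qed
  ultimately show ?thesis by (metis act_fst)
qed

lemma chi_act: assumes "g \<in> G" "d \<in> Or" shows "act g (chi d) = chi (act g d)"
proof -
  have a: "act g (chi d) \<in> Or" using O_closed assms chi_in by blast
  have b: "act g d \<in> Or" using O_closed assms by blast
  have "act g (chi d) = act g d \<or> act g (chi d) = chi (act g d)"
    using chi_char'[OF b a] by simp
  moreover have "g (snd (chi d)) \<noteq> g (snd d)"
  proof
    assume "g (snd (chi d)) = g (snd d)"
    moreover have "snd (chi d) \<in> V" "snd d \<in> V" using O_V chi_in assms(2) by (metis prod.collapse)+
    ultimately have "snd (chi d) = snd d" using g_inj assms(1) by blast
    thus False using chi_snd assms by blast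
  qed
  ultimately show ?thesis by (metis act_snd)
qed

end

context hat begin

definition tau where "tau d = chi (psi d)"
definition sig where "sig d = psi (chi d)"

lemma tau_in: "d \<in> Or \<Longrightarrow> tau d \<in> Or" by (simp add: tau_def psi_in chi_in)
lemma sig_in: "d \<in> Or \<Longrightarrow> sig d \<in> Or" by (simp add: sig_def psi_in chi_in)
lemma sig_tau: "d \<in> Or \<Longrightarrow> sig (tau d) = d" by (simp add: sig_def tau_def psi_in chi_chi psi_psi)
lemma tau_sig: "d \<in> Or \<Longrightarrow> tau (sig d) = d" by (simp add: sig_def tau_def chi_in psi_psi chi_chi)

definition A :: "'a \<times> 'a \<Rightarrow> int \<Rightarrow> 'a \<times> 'a" where
  "A d k = (if 0 \<le> k then (tau ^^ nat k) d else (sig ^^ nat (- k)) d)"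

lemma tau_pow_in: "d \<in> Or \<Longrightarrow> (tau ^^ n) d \<in> Or" by (induction n) (auto simp: tau_in)
lemma sig_pow_in: "d \<in> Or \<Longrightarrow> (sig ^^ n) d \<in> Or" by (induction n) (auto simp: sig_in)

lemma A_in: "d \<in> Or \<Longrightarrow> A d k \<in> Or" by (simp add: A_def tau_pow_in sig_pow_in)
lemma A_0[simp]: "A d 0 = d" by (simp add: A_def)

lemma A_suc: assumes "d \<in> Or" shows "A d (k + 1) = tau (A d k)"
proof (cases "0 \<le> k")
  case True
  hence "nat (k+1) = Suc (nat k)" by simp
  thus ?thesis using True by (simp add: A_def)
next
  case False
  define n where "n = nat (- k)"
  have n: "n \<ge> 1" "nat (-(k+1)) = n - 1" using False n_def by auto
  have s: "(sig ^^ n) d = sig ((sig ^^ (n - 1)) d)"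
    using n(1) by (metis Suc_diff_le diff_Suc_1 funpow.simps(2) o_apply)
  have "A d k = (sig ^^ n) d" using False n_def by (simp add: A_def)
  moreover have "A d (k+1) = (sig ^^ (n - 1)) d"
  proof (cases "k = -1")
    case True thus ?thesis using n_def by (simp add: A_def)
  next
    case False thus ?thesis using \<open>\<not> 0 \<le> k\<close> n by (simp add: A_def)
  qed
  ultimately show ?thesis using s tau_sig sig_pow_in assms by simp
qed

lemma A_pred: assumes "d \<in> Or" shows "A d (k - 1) = sig (A d k)"
proof -
  have "A d k = tau (A d (k - 1))" using A_suc[OF assms, of "k - 1"] by simp
  thus ?thesis using sig_tau A_in assms by simp
qed

lemma A_add: assumes "d \<in> Or" shows "A (A d j) k = A d (j + k)"
proof (induction k rule: int_induct[where k = 0])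
  case base thus ?case by simp
next
  case (step1 i) thus ?case using A_suc A_in assms by (metis add.assoc)
next
  case (step2 i) thus ?case using A_pred A_in assms by (metis add_diff_eq)
qed

lemma tau_act: "g \<in> G \<Longrightarrow> d \<in> Or \<Longrightarrow> act g (tau d) = tau (act g d)"
  by (simp add: tau_def chi_act psi_act psi_in)
lemma sig_act: "g \<in> G \<Longrightarrow> d \<in> Or \<Longrightarrow> act g (sig d) = sig (act g d)"
  by (simp add: sig_def chi_act psi_act chi_in)

lemma A_act: assumes "g \<in> G" "d \<in> Or" shows "act g (A d k) = A (act g d) k"
proof (induction k rule: int_induct[where k = 0])
  case base thus ?case by simp
next
  case (step1 i) thus ?case using A_suc A_in assms tau_act O_closed by metis
next
  case (step2 i) thus ?case using A_pred A_in assms sig_act O_closed by metis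
qed

lemma A_psi: assumes "d \<in> Or" shows "A (psi d) k = psi (A d (- k))"
proof (induction k rule: int_induct[where k = 0])
  case base thus ?case by simp
next
  case (step1 i)
  have a: "A d (- i) \<in> Or" using A_in assms .
  have "A (psi d) (i + 1) = tau (psi (A d (- i)))" using A_suc psi_in assms step1 by metis
  also have "\<dots> = chi (A d (- i))" using a by (simp add: tau_def psi_psi)
  also have "\<dots> = psi (sig (A d (- i)))" using a by (simp add: sig_def psi_psi chi_in)
  also have "\<dots> = psi (A d (- (i + 1)))" using A_pred[OF assms, of "- i"] by simp
  finally show ?case .
next
  case (step2 i)
  have a: "A d (- i) \<in> Or" using A_in assms .
  have "A (psi d) (i - 1) = sig (psi (A d (- i)))" using A_pred psi_in assms step2 by metis
  also have "\<dots> = psi (tau (A d (- i)))" by (simp add: sig_def tau_def)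
  also have "\<dots> = psi (A d (- (i - 1)))" using A_suc[OF assms, of "- i"] by simp
  finally show ?case .
qed

definition u where "u d k = fst (A d k)"
definition w where "w d k = snd (A d k)"

lemma A_uw: "A d k = (u d k, w d k)" by (simp add: u_def w_def)

lemma chi_A: assumes "d \<in> Or" shows "chi (A d (k + 1)) = psi (A d k)"
  using A_suc[OF assms] chi_chi psi_in A_in assms by (simp add: tau_def)

lemma psi_A: assumes "d \<in> Or" shows "psi (A d k) = (u d (k + 1), w d k)"
proof -
  have "fst (psi (A d k)) = fst (chi (psi (A d k)))" by simp
  also have "\<dots> = u d (k + 1)" using A_suc[OF assms] by (simp add: u_def tau_def)
  finally show ?thesis by (metis psi_snd w_def prod.collapse)
qed

lemma R_step: assumes "d \<in> Or" "psi (A d p) = A d q" shows "psi (A d (p + 1)) = A d (q - 1)"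
proof -
  have i: "\<And>p q. psi (A d p) = A d q \<Longrightarrow> A d p = psi (A d q)"
    using psi_psi A_in assms(1) by metis
  have "chi (psi (A d p)) = A d (p + 1)" using A_suc assms(1) by (simp add: tau_def)
  moreover have "chi (A d q) = psi (A d (q - 1))" using chi_A[OF assms(1), of "q - 1"] by simp
  ultimately have "psi (A d (q - 1)) = A d (p + 1)" using assms(2) by simp
  from i[OF this] show ?thesis by simp
qed

lemma R_step': assumes "d \<in> Or" "psi (A d p) = A d q" shows "psi (A d (p - 1)) = A d (q + 1)"
proof -
  have "psi (A d q) = A d p" using psi_psi A_in assms by metis
  hence "psi (A d (q + 1)) = A d (p - 1)" using R_step assms(1) by blast
  thus ?thesis using psi_psi A_in assms(1) by metis
qed

lemma R_all: assumes "d \<in> Or" "psi (A d p) = A d q" shows "psi (A d (p + t)) = A d (q - t)"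
proof (induction t rule: int_induct[where k = 0])
  case base thus ?case using assms by simp
next
  case (step1 i) thus ?case using R_step[OF assms(1) step1(2)] by (simp add: algebra_simps)
next
  case (step2 i) thus ?case using R_step'[OF assms(1) step2(2)] by (simp add: algebra_simps)
qed

lemma R: assumes "d \<in> Or" shows "psi (A d p) \<noteq> A d q"
proof
  assume h: "psi (A d p) = A d q"
  show False
  proof (cases "even (q - p)")
    case True
    then obtain t where t: "q - p = 2 * t" by (metis evenE)
    have "psi (A d (p + t)) = A d (q - t)" using R_all[OF assms h] .
    moreover have "q - t = p + t" using t by simp
    ultimately show False using psi_ne A_in assms by metis
  next
    case False
    then obtain t where t: "q - p = 2 * t + 1" by (metis oddE)
    have "psi (A d (p + t)) = A d (q - t)" using R_all[OF assms h] .
    moreover have "q - t = (p + t) + 1" using t by simp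
    ultimately have "chi (A d ((p + t) + 1)) = A d ((p + t) + 1)" using chi_A[OF assms] by metis
    thus False using chi_ne A_in assms by metis
  qed
qed

lemma rot: assumes "d \<in> Or" shows "\<exists>g\<in>G. \<forall>k. act g (A d k) = A d (k + t)"
proof -
  obtain g where g: "g \<in> G" "act g d = A d t" using O_trans A_in assms by blast
  have "act g (A d k) = A d (k + t)" for k using A_act[OF g(1) assms] g(2) A_add assms by (simp add: add.commute)
  thus ?thesis using g by blast
qed

lemma reflG: assumes "d \<in> Or" shows "\<exists>g\<in>G. \<forall>k. act g (A d k) = psi (A d (- k))"
proof -
  obtain g where g: "g \<in> G" "act g d = psi d" using O_trans psi_in assms by blast
  have "act g (A d k) = psi (A d (- k))" for k using A_act[OF g(1) assms] g(2) A_psi assms by simp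
  thus ?thesis using g by blast
qed

lemma rot_uw: assumes "d \<in> Or" obtains g where "g \<in> G" "\<And>k. g (u d k) = u d (k + t)" "\<And>k. g (w d k) = w d (k + t)"
proof -
  obtain g where "g \<in> G" "\<forall>k. act g (A d k) = A d (k + t)" using rot assms by blast
  thus ?thesis using that by (metis act_fst act_snd u_def w_def)
qed

lemma refl_uw: assumes "d \<in> Or" obtains g where "g \<in> G" "\<And>k. g (u d k) = u d (1 - k)" "\<And>k. g (w d k) = w d (- k)"
proof -
  obtain g where g: "g \<in> G" "\<forall>k. act g (A d k) = psi (A d (- k))" using reflG assms by blast
  have "g (u d k) = u d (1 - k)" for k
    using g psi_A[OF assms, of "- k"] by (metis act_fst u_def fst_conv add.commute diff_minus_eq_add uminus_add_conv_diff)
  moreover have "g (w d k) = w d (- k)" for k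
    using g psi_A[OF assms, of "- k"] by (metis act_snd w_def snd_conv)
  ultimately show ?thesis using that g by blast
qed

lemma B: assumes "d \<in> Or" shows "u d i \<noteq> w d j"
proof
  assume h: "u d i = w d j"
  define c where "c = i - j"
  obtain g where g: "g \<in> G" "\<And>k. g (u d k) = u d (k + - j)" "\<And>k. g (w d k) = w d (k + - j)"
    using rot_uw assms by blast
  have 1: "w d 0 = u d c" using g h c_def by (metis add.right_inverse diff_conv_add_uminus)
  obtain g2 where g2: "g2 \<in> G" "\<And>k. g2 (u d k) = u d (1 - k)" "\<And>k. g2 (w d k) = w d (- k)"
    using refl_uw assms by blast
  have 2: "u d (1 - c) = w d 0" using g2 1 by (metis minus_zero)
  obtain g3 where g3: "g3 \<in> G" "\<And>k. g3 (u d k) = u d (k + - c)" "\<And>k. g3 (w d k) = w d (k + - c)"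
    using rot_uw assms by blast
  have 3: "w d (- c) = u d 0" using g3 1 by (metis add.right_inverse add_0)
  have "psi (A d (- c)) = (w d 0, u d 0)" using psi_A[OF assms, of "- c"] 2 3 by simp
  hence "(w d 0, u d 0) \<in> Or" using psi_in A_in assms by metis
  moreover have "(u d 0, w d 0) \<in> Or" using A_in assms A_uw by metis
  ultimately show False using O_anti by blast
qed

end

context hat begin

lemma ex_period: assumes "d \<in> Or" shows "\<exists>n::nat. n > 0 \<and> A d (int n) = d"
proof -
  define f where "f n = A d (int n)" for n
  have "f ` {..card Or} \<subseteq> Or" using A_in[OF assms] f_def by auto
  moreover have "finite Or" using finV Or_V finite_subset by blast
  moreover have "card {..card Or} > card Or" by simp
  ultimately have "\<not> inj_on f {..card Or}" using card_inj_on_le by (metis not_le)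
  then obtain i j where ij: "i \<le> card Or" "j \<le> card Or" "i \<noteq> j" "f i = f j"
    unfolding inj_on_def by blast
  have key: "A d (int b - int a) = d" if "f a = f b" for a b
  proof -
    have "A d (int b - int a) = A (A d (int b)) (- int a)" using A_add assms by simp
    also have "\<dots> = A (A d (int a)) (- int a)" using that f_def by simp
    also have "\<dots> = d" using A_add assms by simp
    finally show ?thesis .
  qed
  show ?thesis
  proof (cases "i < j")
    case True
    have "A d (int (j - i)) = d" using key[OF ij(4)] True by (simp add: of_nat_diff)
    thus ?thesis using True by (intro exI[of _ "j - i"]) simp
  next
    case False
    hence "j < i" using ij by simp
    have "A d (int (i - j)) = d" using key ij(4) \<open>j < i\<close> by (simp add: of_nat_diff)
    thus ?thesis using \<open>j < i\<close> by (intro exI[of _ "i - j"]) simp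
  qed
qed

definition pd where "pd d = (LEAST n::nat. n > 0 \<and> A d (int n) = d)"

lemma pd: assumes "d \<in> Or" shows "pd d > 0" "A d (int (pd d)) = d"
proof -
  have "pd d > 0 \<and> A d (int (pd d)) = d" unfolding pd_def using ex_period[OF assms] by (rule LeastI_ex)
  thus "pd d > 0" "A d (int (pd d)) = d" by auto
qed

lemma pd_min: assumes "d \<in> Or" "0 < n" "n < pd d" shows "A d (int n) \<noteq> d"
  using not_less_Least[of n "\<lambda>n. n > 0 \<and> A d (int n) = d"] assms unfolding pd_def by blast

lemma A_per: assumes "d \<in> Or" shows "A d (k + int (pd d)) = A d k"
  using A_add[OF assms, of "int (pd d)" k] pd(2)[OF assms] by (simp add: add.commute)

lemma A_per_mult: assumes "d \<in> Or" shows "A d (k + int (pd d) * n) = A d k"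
proof (induction n rule: int_induct[where k = 0])
  case base thus ?case by simp
next
  case (step1 i)
  have "A d (k + int (pd d) * (i + 1)) = A d ((k + int (pd d) * i) + int (pd d))" by (simp add: algebra_simps)
  thus ?case using A_per[OF assms] step1 by simp
next
  case (step2 i)
  have "A d (k + int (pd d) * i) = A d ((k + int (pd d) * (i - 1)) + int (pd d))" by (simp add: algebra_simps)
  thus ?case using A_per[OF assms] step2 by simp
qed

lemma A_mod: assumes "d \<in> Or" shows "A d k = A d (k mod int (pd d))"
proof -
  have "k = k mod int (pd d) + int (pd d) * (k div int (pd d))" by simp
  thus ?thesis using A_per_mult[OF assms] by metis
qed

lemma A_inj: assumes "d \<in> Or" "0 \<le> i" "i < int (pd d)" "0 \<le> j" "j < int (pd d)" "A d i = A d j"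
  shows "i = j"
proof (rule ccontr)
  assume ne: "i \<noteq> j"
  have key: "A d (b - a) = d" if "A d a = A d b" for a b
  proof -
    have "A d (b - a) = A (A d b) (- a)" using A_add assms by simp
    also have "\<dots> = A (A d a) (- a)" using that by simp
    also have "\<dots> = d" using A_add assms by simp
    finally show ?thesis .
  qed
  show False
  proof (cases "i < j")
    case True
    have "A d (int (nat (j - i))) = d" using key[OF assms(6)] True by simp
    thus False using pd_min[OF assms(1), of "nat (j - i)"] True assms by linarith
  next
    case False
    hence "j < i" using ne by simp
    have "A d (int (nat (i - j))) = d" using key assms(6) \<open>j < i\<close> by simp
    thus False using pd_min[OF assms(1), of "nat (i - j)"] \<open>j < i\<close> assms by linarith
  qed
qed

lemma u_eq: assumes "d \<in> Or" "u d i = u d j" shows "i mod int (pd d) = j mod int (pd d)"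
proof -
  define m where "m = int (pd d)"
  have m: "m > 0" using pd(1)[OF assms(1)] m_def by simp
  define i' where "i' = i mod m"
  define j' where "j' = j mod m"
  have r: "0 \<le> i'" "i' < m" "0 \<le> j'" "j' < m" using m i'_def j'_def by auto
  have "u d i' = u d j'" using assms A_mod m_def i'_def j'_def u_def by metis
  hence "fst (A d j') = fst (A d i')" by (simp add: u_def)
  hence "A d j' = A d i' \<or> A d j' = chi (A d i')" using chi_char' A_in assms(1) by blast
  moreover have "chi (A d i') = psi (A d (i' - 1))" using chi_A[OF assms(1), of "i' - 1"] by simp
  ultimately have "A d j' = A d i'" using R[OF assms(1)] by metis
  thus ?thesis using A_inj[OF assms(1)] r m_def i'_def j'_def by metis
qed

lemma w_eq: assumes "d \<in> Or" "w d i = w d j" shows "i mod int (pd d) = j mod int (pd d)"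
proof -
  define m where "m = int (pd d)"
  have m: "m > 0" using pd(1)[OF assms(1)] m_def by simp
  define i' where "i' = i mod m"
  define j' where "j' = j mod m"
  have r: "0 \<le> i'" "i' < m" "0 \<le> j'" "j' < m" using m i'_def j'_def by auto
  have "w d i' = w d j'" using assms A_mod m_def i'_def j'_def w_def by metis
  hence "snd (A d j') = snd (A d i')" by (simp add: w_def)
  hence "A d j' = A d i' \<or> A d j' = psi (A d i')" using psi_char' A_in assms(1) by blast
  hence "A d j' = A d i'" using R[OF assms(1)] by metis
  thus ?thesis using A_inj[OF assms(1)] r m_def i'_def j'_def by metis
qed

definition F where "F d p = (if even p then u d (p div 2) else w d (p div 2))"

lemma u_per_mult: "d \<in> Or \<Longrightarrow> u d (k + int (pd d) * n) = u d k" using A_per_mult u_def by metis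
lemma w_per_mult: "d \<in> Or \<Longrightarrow> w d (k + int (pd d) * n) = w d k" using A_per_mult w_def by metis

lemma F_per_mult: assumes "d \<in> Or" shows "F d (p + 2 * int (pd d) * n) = F d p"
proof -
  have e: "even (p + 2 * int (pd d) * n) = even p" by simp
  have "(p + 2 * int (pd d) * n) div 2 = p div 2 + int (pd d) * n" by simp
  thus ?thesis using e u_per_mult[OF assms] w_per_mult[OF assms] unfolding F_def by simp
qed

lemma F_even: "F d (2 * k) = u d k" by (simp add: F_def)
lemma F_odd: "F d (2 * k + 1) = w d k" by (simp add: F_def)

lemma uw_V: assumes "d \<in> Or" shows "u d k \<in> V" "w d k \<in> V"
  using O_V A_in[OF assms, of k] A_uw by metis+

lemma F_V: "d \<in> Or \<Longrightarrow> F d p \<in> V" using uw_V by (simp add: F_def)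

lemma F_alt: assumes "d \<in> Or"
  shows "even p \<Longrightarrow> (F d p, F d (p+1)) \<in> Or \<and> (F d (p+2), F d (p+1)) \<in> Or"
    and "odd p \<Longrightarrow> (F d (p+1), F d p) \<in> Or \<and> (F d (p+1), F d (p+2)) \<in> Or"
proof -
  assume "even p"
  then obtain k where k: "p = 2 * k" by (metis evenE)
  have "F d p = u d k" "F d (p+1) = w d k" "F d (p+2) = u d (k+1)"
    using F_even F_odd k by (metis, metis, metis distrib_left mult.right_neutral one_add_one)
  thus "(F d p, F d (p+1)) \<in> Or \<and> (F d (p+2), F d (p+1)) \<in> Or"
    using A_in[OF assms, of k] A_uw psi_A[OF assms, of k] psi_in by metis
next
  assume "odd p"
  then obtain k where k: "p = 2 * k + 1" by (metis oddE)
  have e1: "p + 1 = 2 * (k + 1)" "p + 2 = 2 * (k + 1) + 1" using k by simp_all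
  have "F d p = w d k" "F d (p+1) = u d (k+1)" "F d (p+2) = w d (k+1)"
    using F_even F_odd k e1 by metis+
  thus "(F d (p+1), F d p) \<in> Or \<and> (F d (p+1), F d (p+2)) \<in> Or"
    using A_in[OF assms, of "k+1"] A_uw psi_A[OF assms, of k] psi_in A_in[OF assms, of k] by metis
qed

lemma F_E: assumes "d \<in> Or" shows "E (F d p) (F d (p+1))"
proof (cases "even p")
  case True thus ?thesis using F_alt(1)[OF assms True] O_E' by blast
next
  case False
  hence "E (F d (p+1)) (F d p)" using F_alt(2)[OF assms] O_E' by blast
  thus ?thesis using E_V by blast
qed

lemma F_inj: assumes "d \<in> Or" "0 \<le> p" "p < 2 * int (pd d)" "0 \<le> q" "q < 2 * int (pd d)"
  "F d p = F d q" shows "p = q"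
proof -
  define m where "m = int (pd d)"
  have dm: "0 \<le> p div 2" "p div 2 < m" "0 \<le> q div 2" "q div 2 < m" using assms m_def by auto
  show ?thesis
  proof (cases "even p")
    case pe: True
    show ?thesis
    proof (cases "even q")
      case True
      hence "u d (p div 2) = u d (q div 2)" using pe assms(6) by (simp add: F_def)
      hence "p div 2 = q div 2" using u_eq[OF assms(1)] dm m_def by (metis mod_pos_pos_trivial)
      thus ?thesis using pe True by (metis evenE nonzero_mult_div_cancel_left zero_neq_numeral)
    next
      case False
      hence "u d (p div 2) = w d (q div 2)" using pe assms(6) by (simp add: F_def)
      thus ?thesis using B[OF assms(1)] by blast
    qed
  next
    case po: False
    show ?thesis
    proof (cases "even q")
      case True
      hence "u d (q div 2) = w d (p div 2)" using po assms(6) by (simp add: F_def)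
      thus ?thesis using B[OF assms(1)] by blast
    next
      case False
      hence "w d (p div 2) = w d (q div 2)" using po assms(6) by (simp add: F_def)
      hence "p div 2 = q div 2" using w_eq[OF assms(1)] dm m_def by (metis mod_pos_pos_trivial)
      thus ?thesis using po False by (metis odd_two_times_div_two_succ)
    qed
  qed
qed

lemma pd_ge2: assumes "d \<in> Or" shows "pd d \<ge> 2"
proof (rule ccontr)
  assume "\<not> pd d \<ge> 2"
  hence "pd d = 1" using pd(1)[OF assms] by simp
  hence "A d 1 = d" using pd(2)[OF assms] by simp
  hence "tau d = d" using A_suc[OF assms, of 0] by simp
  hence "chi (chi (psi d)) = chi d" unfolding tau_def by simp
  hence "psi d = chi d" using chi_chi psi_in assms by simp
  hence "fst (psi d) = fst d" by (metis chi_fst)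
  thus False using psi_fst assms by blast
qed

definition L where "L d = map (\<lambda>i. F d (int i)) [0..<2 * pd d]"

lemma L_len: "length (L d) = 2 * pd d" by (simp add: L_def)

lemma L_nth_mod: assumes "d \<in> Or" shows "L d ! (i mod (2 * pd d)) = F d (int i)"
proof -
  have pos: "2 * pd d > 0" using pd(1)[OF assms] by simp
  have "L d ! (i mod (2 * pd d)) = F d (int (i mod (2 * pd d)))" using pos by (simp add: L_def)
  moreover have "int i = int (i mod (2 * pd d)) + 2 * int (pd d) * int (i div (2 * pd d))"
  proof -
    have "int i = int (i mod (2 * pd d) + (2 * pd d) * (i div (2 * pd d)))" by (simp only: mod_mult_div_eq)
    also have "\<dots> = int (i mod (2 * pd d)) + 2 * int (pd d) * int (i div (2 * pd d))"
      unfolding of_nat_add of_nat_mult by simp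
    finally show ?thesis .
  qed
  ultimately show ?thesis using F_per_mult[OF assms] by metis
qed

lemma L_nth: assumes "d \<in> Or" "i < 2 * pd d" shows "L d ! i = F d (int i)"
  using L_nth_mod[OF assms(1), of i] assms(2) by simp

lemma card_cycle_edges: assumes "distinct xs" "length xs \<ge> 3"
  shows "card (cycle_edges xs) = length xs"
proof -
  define n where "n = length xs"
  define f where "f i = {xs ! i, xs ! ((i + 1) mod n)}" for i
  have ce: "cycle_edges xs = f ` {..<n}" by (auto simp: cycle_edges_def f_def n_def)
  have "inj_on f {..<n}"
  proof (rule inj_onI)
    fix i j assume ij: "i \<in> {..<n}" "j \<in> {..<n}" "f i = f j"
    have n3: "n \<ge> 3" using assms n_def by simp
    have lt: "(i+1) mod n < n" "(j+1) mod n < n" using n3 by auto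
    have inj: "\<And>a b. a < n \<Longrightarrow> b < n \<Longrightarrow> xs ! a = xs ! b \<Longrightarrow> a = b"
      using assms(1) n_def nth_eq_iff_index_eq by blast
    from ij(3) have "(xs ! i = xs ! j \<and> xs ! ((i+1) mod n) = xs ! ((j+1) mod n)) \<or>
      (xs ! i = xs ! ((j+1) mod n) \<and> xs ! ((i+1) mod n) = xs ! j)"
      unfolding f_def by (auto simp: doubleton_eq_iff)
    thus "i = j"
    proof
      assume "xs ! i = xs ! j \<and> xs ! ((i+1) mod n) = xs ! ((j+1) mod n)"
      thus ?thesis using inj[of i j] ij by simp
    next
      assume h: "xs ! i = xs ! ((j+1) mod n) \<and> xs ! ((i+1) mod n) = xs ! j"
      have a: "i = (j+1) mod n" using inj[of i "(j+1) mod n"] h ij lt by simp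
      have b: "(i+1) mod n = j" using inj[of "(i+1) mod n" j] h ij lt by simp
      have mi: "(i + 1) mod n = (if i + 1 < n then i + 1 else 0)"
      proof (cases "i + 1 < n")
        case False hence "i + 1 = n" using ij by simp
        thus ?thesis by simp
      qed simp
      have mj: "(j + 1) mod n = (if j + 1 < n then j + 1 else 0)"
      proof (cases "j + 1 < n")
        case False hence "j + 1 = n" using ij by simp
        thus ?thesis by simp
      qed simp
      show ?thesis using a b n3 unfolding mi mj by (simp split: if_splits)
    qed
  qed
  thus ?thesis using ce n_def by (simp add: card_image)
qed

lemma L_alt: assumes "d \<in> Or" shows "is_cycle V E (L d)" "alternating Or (L d)"
proof -
  define n where "n = 2 * pd d"
  have n4: "n \<ge> 4" using pd_ge2[OF assms] n_def by simp
  have dist: "distinct (L d)"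
  proof (subst distinct_conv_nth, intro allI impI)
    fix i j assume h: "i < length (L d)" "j < length (L d)" "i \<noteq> j"
    show "L d ! i \<noteq> L d ! j"
    proof
      assume "L d ! i = L d ! j"
      hence "F d (int i) = F d (int j)" using L_nth[OF assms] h L_len by metis
      hence "int i = int j" using F_inj[OF assms] h L_len by (metis of_nat_0_le_iff of_nat_less_iff of_nat_mult of_nat_numeral)
      thus False using h by simp
    qed
  qed
  show "is_cycle V E (L d)"
    unfolding is_cycle_def
  proof (intro conjI allI impI)
    show "distinct (L d)" by (rule dist)
    show "3 \<le> length (L d)" using n4 L_len n_def by simp
    show "set (L d) \<subseteq> V" using F_V[OF assms] by (auto simp: L_def)
    fix i assume "i < length (L d)"
    have "E (F d (int i)) (F d (int i + 1))" by (rule F_E[OF assms])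
    moreover have "L d ! i = F d (int i)" using L_nth_mod[OF assms, of i] \<open>i < length (L d)\<close> L_len by simp
    moreover have "L d ! ((i + 1) mod length (L d)) = F d (int i + 1)"
      using L_nth_mod[OF assms, of "i+1"] L_len by (simp add: add.commute)
    ultimately show "E (L d ! i) (L d ! ((i + 1) mod length (L d)))" by simp
  qed
  show "alternating Or (L d)"
    unfolding alternating_def Let_def
  proof (intro allI impI)
    fix i assume "i < length (L d)"
    have 0: "L d ! i = F d (int i)" using L_nth_mod[OF assms, of i] \<open>i < length (L d)\<close> L_len by simp
    have 1: "L d ! ((i + 1) mod length (L d)) = F d (int i + 1)"
      using L_nth_mod[OF assms, of "i+1"] L_len by (simp add: add.commute)
    have 2: "L d ! ((i + 2) mod length (L d)) = F d (int i + 2)"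
      using L_nth_mod[OF assms, of "i+2"] L_len by (simp add: add.commute)
    show "(L d ! i, L d ! ((i + 1) mod length (L d))) \<in> Or \<and> (L d ! ((i + 2) mod length (L d)), L d ! ((i + 1) mod length (L d))) \<in> Or \<or>
          (L d ! ((i + 1) mod length (L d)), L d ! i) \<in> Or \<and> (L d ! ((i + 1) mod length (L d)), L d ! ((i + 2) mod length (L d))) \<in> Or"
      unfolding 0 1 2 using F_alt[OF assms, of "int i"] by blast
  qed
qed

lemma Or_some: "some_orientation G E = Or" by (simp add: Or_def)

lemma L_cyc: assumes "d \<in> Or" shows "cycle_edges (L d) \<in> alt_cycles G V E"
  using L_alt[OF assms] unfolding alt_cycles_def Or_some by blast

lemma pd3: assumes "d \<in> Or" shows "pd d = 3"
proof -
  have "card (cycle_edges (L d)) = 6" using rad L_cyc[OF assms] by (simp add: has_radius_def)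
  moreover have "card (cycle_edges (L d)) = length (L d)"
    using L_alt(1)[OF assms] by (intro card_cycle_edges) (auto simp: is_cycle_def)
  ultimately show ?thesis using L_len by simp
qed

end

context hat begin

lemma u3: "d \<in> Or \<Longrightarrow> u d i = u d j \<Longrightarrow> i mod 3 = j mod 3" using u_eq[of d i j] pd3[of d] by simp
lemma w3: "d \<in> Or \<Longrightarrow> w d i = w d j \<Longrightarrow> i mod 3 = j mod 3" using w_eq[of d i j] pd3[of d] by simp
lemma A3: "d \<in> Or \<Longrightarrow> A d (k + 3 * n) = A d k" using A_per_mult[of d k n] pd3[of d] by simp
lemma u_per: "d \<in> Or \<Longrightarrow> u d (k + 3 * n) = u d k" using A3 u_def by metis
lemma w_per: "d \<in> Or \<Longrightarrow> w d (k + 3 * n) = w d k" using A3 w_def by metis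
lemma F6: "d \<in> Or \<Longrightarrow> F d (p + 6 * n) = F d p" using F_per_mult[of d p n] pd3 by simp
lemma F_mod6: assumes "d \<in> Or" shows "F d p = F d (p mod 6)"
proof -
  have "p = p mod 6 + 6 * (p div 6)" by simp
  thus ?thesis using F6[OF assms] by metis
qed

definition Cyc where "Cyc d = {{F d p, F d (p + 1)} | p. True}"

lemma reidx1: assumes "\<And>p. g p = f (p + c)"
  shows "{{g p, g (p + 1)} | p::int. True} = {{f p, f (p + 1)} | p. True}"
proof (rule equalityI; rule subsetI)
  fix e assume "e \<in> {{g p, g (p + 1)} | p::int. True}"
  then obtain p where "e = {g p, g (p+1)}" by blast
  hence "e = {f (p + c), f ((p + c) + 1)}" using assms by (simp add: algebra_simps)
  thus "e \<in> {{f p, f (p + 1)} | p. True}" by blast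
next
  fix e assume "e \<in> {{f p, f (p + 1)} | p::int. True}"
  then obtain p where "e = {f p, f (p+1)}" by blast
  hence "e = {g (p - c), g ((p - c) + 1)}" using assms by (simp add: algebra_simps)
  thus "e \<in> {{g p, g (p + 1)} | p. True}" by blast
qed

lemma reidx2: assumes "\<And>p. g p = f (c - p)"
  shows "{{g p, g (p + 1)} | p::int. True} = {{f p, f (p + 1)} | p. True}"
proof (rule equalityI; rule subsetI)
  fix e assume "e \<in> {{g p, g (p + 1)} | p::int. True}"
  then obtain p where "e = {g p, g (p+1)}" by blast
  hence "e = {f ((c - p - 1) + 1), f (c - p - 1)}" using assms by (simp add: algebra_simps)
  hence "e = {f (c - p - 1), f ((c - p - 1) + 1)}" by (simp add: insert_commute)
  thus "e \<in> {{f p, f (p + 1)} | p. True}" by blast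
next
  fix e assume "e \<in> {{f p, f (p + 1)} | p::int. True}"
  then obtain p where "e = {f p, f (p+1)}" by blast
  hence "e = {g (c - p), g (c - p - 1)}" using assms by (simp add: algebra_simps)
  hence "e = {g (c - p - 1), g ((c - p - 1) + 1)}" by (simp add: insert_commute)
  thus "e \<in> {{g p, g (p + 1)} | p. True}" by blast
qed

lemma F_shift: assumes "d \<in> Or" shows "F (A d k) p = F d (p + 2 * k)"
proof -
  have uu: "u (A d k) j = u d (k + j)" for j using A_add[OF assms] by (simp add: u_def)
  have ww: "w (A d k) j = w d (k + j)" for j using A_add[OF assms] by (simp add: w_def)
  have e: "even (p + 2 * k) = even p" by simp
  have "(p + 2 * k) div 2 = k + p div 2" by simp
  thus ?thesis using e uu ww by (simp add: F_def add.commute)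
qed

lemma Cyc_A: assumes "d \<in> Or" shows "Cyc (A d k) = Cyc d"
  unfolding Cyc_def by (rule reidx1, rule F_shift[OF assms])

lemma F_psi: assumes "d \<in> Or" shows "F (psi d) p = F d (2 - p)"
proof -
  have uu: "u (psi d) j = u d (1 - j)" for j
    using A_psi[OF assms, of j] psi_A[OF assms, of "- j"] by (simp add: u_def)
  have ww: "w (psi d) j = w d (- j)" for j
    using A_psi[OF assms, of j] psi_A[OF assms, of "- j"] by (simp add: w_def)
  show ?thesis
  proof (cases "even p")
    case True
    then obtain k where k: "p = 2 * k" by (metis evenE)
    have "2 - p = 2 * (1 - k)" using k by simp
    thus ?thesis using k uu F_even by metis
  next
    case False
    then obtain k where k: "p = 2 * k + 1" by (metis oddE)
    have "2 - p = 2 * (- k) + 1" using k by simp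
    thus ?thesis using k ww F_odd by metis
  qed
qed

lemma Cyc_psi: assumes "d \<in> Or" shows "Cyc (psi d) = Cyc d"
  unfolding Cyc_def by (rule reidx2, rule F_psi[OF assms])

lemma Cyc_chi: assumes "d \<in> Or" shows "Cyc (chi d) = Cyc d"
proof -
  have "chi d = psi (A d (- 1))" using chi_A[OF assms, of "- 1"] by simp
  thus ?thesis using Cyc_psi Cyc_A A_in assms by metis
qed

lemma Cyc_V: "cycle_vertices (Cyc d) = range (F d)"
  unfolding cycle_vertices_def Cyc_def
proof (rule equalityI; rule subsetI)
  fix x assume "x \<in> \<Union> {{F d p, F d (p + 1)} | p. True}"
  thus "x \<in> range (F d)" by auto
next
  fix x assume "x \<in> range (F d)"
  then obtain p where "x = F d p" by blast
  thus "x \<in> \<Union> {{F d p, F d (p + 1)} | p. True}" by blast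
qed

lemma Cyc_V': assumes "d \<in> Or" shows "cycle_vertices (Cyc d) \<subseteq> V"
  unfolding Cyc_V using F_V[OF assms] by auto

lemma u_in_Cyc: "u d k \<in> cycle_vertices (Cyc d)" using Cyc_V F_even by (metis rangeI)
lemma w_in_Cyc: "w d k \<in> cycle_vertices (Cyc d)" using Cyc_V F_odd by (metis rangeI)

lemma Cyc_V_cases: "x \<in> cycle_vertices (Cyc d) \<Longrightarrow> (\<exists>k. x = u d k) \<or> (\<exists>k. x = w d k)"
  using Cyc_V by (auto simp: F_def)

lemma Cyc_L: assumes "d \<in> Or" shows "cycle_edges (L d) = Cyc d"
proof -
  have len: "length (L d) = 6" using L_len pd3[OF assms] by simp
  have nth: "L d ! (i mod 6) = F d (int i)" for i using L_nth_mod[OF assms, of i] pd3[OF assms] by simp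
  show ?thesis
    unfolding cycle_edges_def Cyc_def len
  proof (rule equalityI; rule subsetI)
    fix e assume "e \<in> {{L d ! i, L d ! ((i + 1) mod 6)} |i. i < 6}"
    then obtain i where i: "i < 6" "e = {L d ! i, L d ! ((i + 1) mod 6)}" by blast
    hence "e = {F d (int i), F d (int i + 1)}" using nth[of i] nth[of "i+1"] by (simp add: add.commute)
    thus "e \<in> {{F d p, F d (p + 1)} |p. True}" by blast
  next
    fix e assume "e \<in> {{F d p, F d (p + 1)} |p. True}"
    then obtain p where p: "e = {F d p, F d (p + 1)}" by blast
    define i where "i = nat (p mod 6)"
    have i6: "i < 6" using i_def by simp
    have ip: "int i = p mod 6" using i_def by simp
    have "F d p = F d (int i)" using F_mod6[OF assms] ip by metis
    moreover have "F d (p + 1) = F d (int i + 1)"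
      using F_mod6[OF assms, of "p+1"] F_mod6[OF assms, of "int i + 1"] ip by (simp add: mod_add_left_eq)
    ultimately have "e = {L d ! i, L d ! ((i + 1) mod 6)}" using p nth[of i] nth[of "i+1"] i6 by (simp add: add.commute)
    thus "e \<in> {{L d ! i, L d ! ((i + 1) mod 6)} |i. i < 6}" using i6 by blast
  qed
qed

lemma Cyc_alt: "d \<in> Or \<Longrightarrow> Cyc d \<in> alt_cycles G V E" using L_cyc Cyc_L by metis

definition oa where "oa v = (v, SOME y. (v,y) \<in> Or)"
definition ia where "ia v = (SOME x. (x,v) \<in> Or, v)"
definition Cout where "Cout v = Cyc (oa v)"
definition Cin where "Cin v = Cyc (ia v)"

lemma oa_in: assumes "v \<in> V" shows "oa v \<in> Or"
proof -
  have "outs v \<noteq> {}" using deg2(1)[OF assms] by auto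
  hence "\<exists>y. (v,y) \<in> Or" by (auto simp: outs_def)
  thus ?thesis unfolding oa_def by (rule someI_ex)
qed

lemma ia_in: assumes "v \<in> V" shows "ia v \<in> Or"
proof -
  have "ins v \<noteq> {}" using deg2(2)[OF assms] by auto
  hence "\<exists>x. (x,v) \<in> Or" by (auto simp: ins_def)
  thus ?thesis unfolding ia_def by (rule someI_ex)
qed

lemma oa_fst[simp]: "fst (oa v) = v" by (simp add: oa_def)
lemma ia_snd[simp]: "snd (ia v) = v" by (simp add: ia_def)

lemma Cout_eq: assumes "(v,y) \<in> Or" shows "Cyc (v,y) = Cout v"
proof -
  have v: "v \<in> V" using O_V assms by blast
  have "(v,y) = oa v \<or> (v,y) = chi (oa v)" using chi_char'[OF oa_in[OF v] assms] by simp
  thus ?thesis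
  proof
    assume "(v,y) = oa v" thus ?thesis by (simp add: Cout_def)
  next
    assume "(v,y) = chi (oa v)" thus ?thesis using Cyc_chi oa_in[OF v] by (simp add: Cout_def)
  qed
qed

lemma Cin_eq: assumes "(x,v) \<in> Or" shows "Cyc (x,v) = Cin v"
proof -
  have v: "v \<in> V" using O_V assms by blast
  have "(x,v) = ia v \<or> (x,v) = psi (ia v)" using psi_char'[OF ia_in[OF v] assms] by simp
  thus ?thesis
  proof
    assume "(x,v) = ia v" thus ?thesis by (simp add: Cin_def)
  next
    assume "(x,v) = psi (ia v)" thus ?thesis using Cyc_psi ia_in[OF v] by (simp add: Cin_def)
  qed
qed

lemma u_Cout: "d \<in> Or \<Longrightarrow> Cout (u d k) = Cyc d" using Cout_eq A_in A_uw Cyc_A by metis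
lemma w_Cin: "d \<in> Or \<Longrightarrow> Cin (w d k) = Cyc d" using Cin_eq A_in A_uw Cyc_A by metis

lemma in_Cyc: assumes "d \<in> Or" "x \<in> cycle_vertices (Cyc d)" shows "Cyc d = Cin x \<or> Cyc d = Cout x"
  using Cyc_V_cases[OF assms(2)] u_Cout[OF assms(1)] w_Cin[OF assms(1)] by metis

lemma in_Cout: "v \<in> V \<Longrightarrow> v \<in> cycle_vertices (Cout v)"
  using u_in_Cyc[of "oa v" 0] by (simp add: Cout_def u_def)
lemma in_Cin: "v \<in> V \<Longrightarrow> v \<in> cycle_vertices (Cin v)"
  using w_in_Cyc[of "ia v" 0] by (simp add: Cin_def w_def)

lemma K5: assumes "d \<in> Or" "(x,y) \<in> Or" "{x,y} \<in> Cyc d"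
  shows "\<exists>k. (x,y) = A d k \<or> (x,y) = psi (A d k)"
proof -
  obtain p where p: "{x,y} = {F d p, F d (p+1)}" using assms(3) by (auto simp: Cyc_def)
  show ?thesis
  proof (cases "even p")
    case True
    have o: "(F d p, F d (p+1)) \<in> Or" using F_alt(1)[OF assms(1) True] by blast
    obtain k where k: "p = 2 * k" using True by (metis evenE)
    have "(x,y) = (F d p, F d (p+1))" using p o assms(2) O_anti by (auto simp: doubleton_eq_iff)
    moreover have "(F d p, F d (p+1)) = A d k" using k F_even F_odd A_uw by metis
    ultimately show ?thesis by blast
  next
    case False
    have o: "(F d (p+1), F d p) \<in> Or" using F_alt(2)[OF assms(1) False] by blast
    obtain k where k: "p = 2 * k + 1" using False by (metis oddE)
    have k1: "p + 1 = 2 * (k + 1)" using k by simp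
    have "(x,y) = (F d (p+1), F d p)" using p o assms(2) O_anti by (auto simp: doubleton_eq_iff)
    moreover have "(F d (p+1), F d p) = psi (A d k)" using k k1 F_even F_odd psi_A[OF assms(1)] by metis
    ultimately show ?thesis by blast
  qed
qed

lemma K4: assumes "v \<in> V" shows "Cin v \<noteq> Cout v"
proof
  assume h: "Cin v = Cout v"
  have i: "ia v \<in> Or" using ia_in assms .
  have "{fst (ia v), v} \<in> Cin v" unfolding Cin_def Cyc_def
    using F_even[of "ia v" 0] F_odd[of "ia v" 0] by (simp add: u_def w_def) (metis add_0 mult_zero_right)
  hence "{fst (ia v), v} \<in> Cyc (oa v)" using h by (simp add: Cout_def)
  then obtain k where "(fst (ia v), v) = A (oa v) k \<or> (fst (ia v), v) = psi (A (oa v) k)"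
    using K5[OF oa_in[OF assms]] i by (metis ia_snd prod.collapse)
  hence "v = w (oa v) k" using psi_snd w_def by (metis snd_conv)
  moreover have "v = u (oa v) 0" by (simp add: u_def)
  ultimately show False using B[OF oa_in[OF assms]] by metis
qed

lemma F_act: assumes "g \<in> G" "d \<in> Or" shows "F (act g d) p = g (F d p)"
  using A_act[OF assms] by (simp add: F_def u_def w_def) (metis act_fst act_snd)

lemma Cyc_act: assumes "g \<in> G" "d \<in> Or" shows "cyc_act g (Cyc d) = Cyc (act g d)"
  unfolding cyc_act_def Cyc_def F_act[OF assms]
proof (rule equalityI; rule subsetI)
  fix x assume "x \<in> (`) g ` {{F d p, F d (p + 1)} |p. True}"
  thus "x \<in> {{g (F d p), g (F d (p + 1))} |p. True}" by auto
next
  fix x assume "x \<in> {{g (F d p), g (F d (p + 1))} |p. True}"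
  then obtain p where p: "x = {g (F d p), g (F d (p + 1))}" by blast
  show "x \<in> (`) g ` {{F d p, F d (p + 1)} |p. True}"
    by (rule image_eqI[where x="{F d p, F d (p+1)}"]) (auto simp: p)
qed

lemma Cout_act: assumes "g \<in> G" "v \<in> V" shows "Cout (g v) = cyc_act g (Cout v)"
proof -
  have "act g (oa v) \<in> Or" using O_closed assms oa_in by blast
  hence "Cyc (act g (oa v)) = Cout (g v)" using Cout_eq by (metis act_fst oa_fst prod.collapse)
  thus ?thesis using Cyc_act[OF assms(1) oa_in[OF assms(2)]] by (simp add: Cout_def)
qed

lemma Cin_act: assumes "g \<in> G" "v \<in> V" shows "Cin (g v) = cyc_act g (Cin v)"
proof -
  have "act g (ia v) \<in> Or" using O_closed assms ia_in by blast
  hence "Cyc (act g (ia v)) = Cin (g v)" using Cin_eq by (metis act_snd ia_snd prod.collapse)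
  thus ?thesis using Cyc_act[OF assms(1) ia_in[OF assms(2)]] by (simp add: Cin_def)
qed

lemma V_act: "cycle_vertices (cyc_act g C) = g ` cycle_vertices C"
  by (auto simp: cycle_vertices_def cyc_act_def)

end

context hat begin

lemma att3: assumes "d1 \<in> Or" "d2 \<in> Or" "Cyc d1 \<noteq> Cyc d2"
  "a \<in> cycle_vertices (Cyc d1) \<inter> cycle_vertices (Cyc d2)"
  "b \<in> cycle_vertices (Cyc d1) \<inter> cycle_vertices (Cyc d2)"
  "c \<in> cycle_vertices (Cyc d1) \<inter> cycle_vertices (Cyc d2)"
  "a \<noteq> b" "a \<noteq> c" "b \<noteq> c"
  shows False
proof -
  let ?I = "cycle_vertices (Cyc d1) \<inter> cycle_vertices (Cyc d2)"
  have "card ?I = 2" using att Cyc_alt[OF assms(1)] Cyc_alt[OF assms(2)] assms(3,4)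
    unfolding has_attachment_def by blast
  moreover have "finite ?I" using Cyc_V'[OF assms(1)] finV finite_subset by blast
  moreover have "{a,b,c} \<subseteq> ?I" using assms(4-6) by blast
  ultimately have "card {a,b,c} \<le> 2" by (metis card_mono)
  thus False using assms(7-9) by simp
qed

lemma u012: assumes "d \<in> Or" shows "u d 0 \<noteq> u d 1" "u d 0 \<noteq> u d 2" "u d 1 \<noteq> u d 2"
  using u3[OF assms, of 0 1] u3[OF assms, of 0 2] u3[OF assms, of 1 2] by auto

lemma CD_ne: assumes "d \<in> Or" shows "Cin (u d 0) \<noteq> Cyc d"
  using K4[OF uw_V(1)[OF assms]] u_Cout[OF assms] by metis

lemma Cin_Cyc: "v \<in> V \<Longrightarrow> Cin v = Cyc (ia v)" by (simp add: Cin_def)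

lemma K6c1: assumes "d \<in> Or" shows "Cin (u d 0) \<noteq> Cin (u d 1)"
proof
  assume h: "Cin (u d 0) = Cin (u d 1)"
  obtain g where g: "g \<in> G" "\<And>k. g (u d k) = u d (k + 1)" "\<And>k. g (w d k) = w d (k + 1)"
    using rot_uw assms by blast
  have V: "\<And>k. u d k \<in> V" using uw_V assms by blast
  have "Cin (u d 1) = cyc_act g (Cin (u d 0))" using Cin_act[OF g(1) V[of 0]] g(2)[of 0] by simp
  also have "\<dots> = cyc_act g (Cin (u d 1))" using h by simp
  also have "\<dots> = Cin (u d 2)" using Cin_act[OF g(1) V[of 1]] g(2)[of 1] by simp
  finally have h2: "Cin (u d 1) = Cin (u d 2)" .
  let ?C = "Cin (u d 0)"
  have iC: "ia (u d 0) \<in> Or" using ia_in V by blast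
  have C: "?C = Cyc (ia (u d 0))" using Cin_Cyc V by blast
  have m: "u d 0 \<in> cycle_vertices ?C" "u d 1 \<in> cycle_vertices ?C" "u d 2 \<in> cycle_vertices ?C"
    using in_Cin V h h2 by metis+
  show False
    using att3[OF iC assms, of "u d 0" "u d 1" "u d 2"] m C CD_ne[OF assms] u_in_Cyc u012[OF assms] by auto
qed

lemma K6c2: assumes "d \<in> Or" shows "Cin (u d 0) \<noteq> Cin (u d 2)"
proof
  assume h: "Cin (u d 0) = Cin (u d 2)"
  obtain g where g: "g \<in> G" "\<And>k. g (u d k) = u d (k + 1)" "\<And>k. g (w d k) = w d (k + 1)"
    using rot_uw assms by blast
  have V: "\<And>k. u d k \<in> V" using uw_V assms by blast
  have "Cin (u d 1) = cyc_act g (Cin (u d 0))" using Cin_act[OF g(1) V[of 0]] g(2)[of 0] by simp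
  also have "\<dots> = cyc_act g (Cin (u d 2))" using h by simp
  also have "\<dots> = Cin (u d 3)" using Cin_act[OF g(1) V[of 2]] g(2)[of 2] by simp
  also have "\<dots> = Cin (u d 0)" using u_per[OF assms, of 0 1] by simp
  finally show False using K6c1[OF assms] by simp
qed

lemma K6a: assumes "d \<in> Or" shows "Cin (u d 0) \<noteq> Cout (w d 0)"
proof
  assume h: "Cin (u d 0) = Cout (w d 0)"
  obtain g where g: "g \<in> G" "\<And>k. g (u d k) = u d (1 - k)" "\<And>k. g (w d k) = w d (- k)"
    using refl_uw assms by blast
  have V: "\<And>k. u d k \<in> V" "\<And>k. w d k \<in> V" using uw_V assms by blast+
  have "Cin (u d 1) = cyc_act g (Cin (u d 0))" using Cin_act[OF g(1) V(1)[of 0]] g(2)[of 0] by simp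
  also have "\<dots> = cyc_act g (Cout (w d 0))" using h by simp
  also have "\<dots> = Cout (w d 0)" using Cout_act[OF g(1) V(2)[of 0]] g(3)[of 0] by simp
  finally show False using K6c1[OF assms] h by simp
qed

lemma K6b: assumes "d \<in> Or" shows "Cin (u d 0) \<noteq> Cout (w d (- 1))"
proof
  assume h: "Cin (u d 0) = Cout (w d (- 1))"
  obtain g where g: "g \<in> G" "\<And>k. g (u d k) = u d (1 - k)" "\<And>k. g (w d k) = w d (- k)"
    using refl_uw assms by blast
  obtain g' where g': "g' \<in> G" "\<And>k. g' (u d k) = u d (k + - 1)" "\<And>k. g' (w d k) = w d (k + - 1)"
    using rot_uw assms by blast
  have V: "\<And>k. u d k \<in> V" "\<And>k. w d k \<in> V" using uw_V assms by blast+
  have "Cin (u d 1) = cyc_act g (Cin (u d 0))" using Cin_act[OF g(1) V(1)[of 0]] g(2)[of 0] by simp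
  also have "\<dots> = cyc_act g (Cout (w d (- 1)))" using h by simp
  also have "\<dots> = Cout (w d 1)" using Cout_act[OF g(1) V(2)[of "- 1"]] g(3)[of "- 1"] by simp
  finally have h1: "Cin (u d 1) = Cout (w d 1)" .
  have "Cin (u d 0) = cyc_act g' (Cin (u d 1))" using Cin_act[OF g'(1) V(1)[of 1]] g'(2)[of 1] by simp
  also have "\<dots> = cyc_act g' (Cout (w d 1))" using h1 by simp
  also have "\<dots> = Cout (w d 0)" using Cout_act[OF g'(1) V(2)[of 1]] g'(3)[of 1] by simp
  finally show False using K6a[OF assms] by simp
qed

lemma u_mod3: "d \<in> Or \<Longrightarrow> u d k = u d (k mod 3)"
  using u_per[of d "k mod 3" "k div 3"] by simp
lemma w_mod3: "d \<in> Or \<Longrightarrow> w d k = w d (k mod 3)"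
  using w_per[of d "k mod 3" "k div 3"] by simp

lemma mod3_cases: "(k::int) mod 3 = 0 \<or> k mod 3 = 1 \<or> k mod 3 = 2" by presburger

lemma K6: assumes "d \<in> Or" shows "Cin (u d 0) = Cout (w d 1)"
proof -
  have V: "\<And>k. u d k \<in> V" "\<And>k. w d k \<in> V" using uw_V assms by blast+
  define e where "e = ia (u d 0)"
  have iC: "e \<in> Or" using ia_in V e_def by blast
  have C: "Cin (u d 0) = Cyc e" using Cin_Cyc V e_def by blast
  have ne: "Cyc e \<noteq> Cyc d" using CD_ne[OF assms] C by simp
  have u0: "u d 0 \<in> cycle_vertices (Cyc e) \<inter> cycle_vertices (Cyc d)"
    using in_Cin[OF V(1)[of 0]] u_in_Cyc[of d 0] C by simp
  have ca: "Cyc e \<in> alt_cycles G V E" "Cyc d \<in> alt_cycles G V E" using Cyc_alt iC assms by auto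
  have "card (cycle_vertices (Cyc e) \<inter> cycle_vertices (Cyc d)) = 2"
    using att ca ne u0 unfolding has_attachment_def by blast
  then obtain a b where ab: "a \<in> cycle_vertices (Cyc e) \<inter> cycle_vertices (Cyc d)"
    "b \<in> cycle_vertices (Cyc e) \<inter> cycle_vertices (Cyc d)" "a \<noteq> b"
    unfolding card_2_iff' by blast
  have "\<exists>z. z \<in> cycle_vertices (Cyc e) \<inter> cycle_vertices (Cyc d) \<and> z \<noteq> u d 0"
    using ab by blast
  then obtain z where z: "z \<in> cycle_vertices (Cyc e)" "z \<in> cycle_vertices (Cyc d)" "z \<noteq> u d 0" by blast
  have zC: "Cyc e = Cin z \<or> Cyc e = Cout z" using in_Cyc[OF iC z(1)] .
  from Cyc_V_cases[OF z(2)] show ?thesis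
  proof
    assume "\<exists>k. z = u d k"
    then obtain k where k: "z = u d k" by blast
    have "Cout z = Cyc d" using u_Cout[OF assms] k by simp
    hence e1: "Cyc e = Cin (u d (k mod 3))" using zC ne k u_mod3[OF assms, of k] by auto
    have "k mod 3 \<noteq> 0" using z(3) k u_mod3[OF assms, of k] by auto
    hence "k mod 3 = 1 \<or> k mod 3 = 2" using mod3_cases[of k] by blast
    thus ?thesis
    proof
      assume "k mod 3 = 1" thus ?thesis using e1 C K6c1[OF assms] by simp
    next
      assume "k mod 3 = 2" thus ?thesis using e1 C K6c2[OF assms] by simp
    qed
  next
    assume "\<exists>k. z = w d k"
    then obtain k where k: "z = w d k" by blast
    have "Cin z = Cyc d" using w_Cin[OF assms] k by simp
    hence e1: "Cyc e = Cout (w d (k mod 3))" using zC ne k w_mod3[OF assms, of k] by auto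
    have w2: "w d 2 = w d (- 1)" using w_per[OF assms, of "- 1" 1] by simp
    have "k mod 3 = 0 \<or> k mod 3 = 1 \<or> k mod 3 = 2" by (rule mod3_cases)
    thus ?thesis
    proof (elim disjE)
      assume "k mod 3 = 0" thus ?thesis using e1 C K6a[OF assms] by simp
    next
      assume "k mod 3 = 1" thus ?thesis using e1 C by simp
    next
      assume "k mod 3 = 2" thus ?thesis using e1 C K6b[OF assms] w2 by simp
    qed
  qed
qed

lemma K6g: assumes "d \<in> Or" shows "Cin (u d k) = Cout (w d (k + 1))"
proof -
  have a: "A d k \<in> Or" using A_in assms .
  have "u (A d k) 0 = u d k" using A_add[OF assms, of k 0] by (simp add: u_def)
  moreover have "w (A d k) 1 = w d (k + 1)" using A_add[OF assms, of k 1] by (simp add: w_def)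
  ultimately show ?thesis using K6[OF a] by simp
qed

lemma P: assumes "x \<in> V" "y \<in> V" shows "(x,y) \<in> Or \<longleftrightarrow> Cin y = Cout x \<and> Cin x \<noteq> Cout y"
proof
  assume h: "(x,y) \<in> Or"
  define d where "d = (x,y)"
  have d: "d \<in> Or" using h d_def by simp
  have "Cout x = Cyc d" "Cin y = Cyc d" using Cout_eq[OF h] Cin_eq[OF h] d_def by auto
  moreover have "Cin x \<noteq> Cout y"
  proof
    assume e: "Cin x = Cout y"
    have "x = u d 0" "y = w d 0" by (simp_all add: u_def w_def d_def)
    hence "Cin (u d 0) = Cout (w d 0)" using e by simp
    thus False using K6a[OF d] by simp
  qed
  ultimately show "Cin y = Cout x \<and> Cin x \<noteq> Cout y" by simp
next
  assume h: "Cin y = Cout x \<and> Cin x \<noteq> Cout y"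
  define d where "d = oa x"
  have d: "d \<in> Or" using oa_in assms d_def by simp
  have xu: "x = u d 0" by (simp add: u_def d_def)
  have "y \<in> cycle_vertices (Cyc d)" using in_Cin[OF assms(2)] h by (simp add: Cout_def d_def)
  hence "(\<exists>k. y = u d k) \<or> (\<exists>k. y = w d k)" using Cyc_V_cases by blast
  thus "(x,y) \<in> Or"
  proof
    assume "\<exists>k. y = u d k"
    then obtain k where "y = u d k" by blast
    hence "Cout y = Cin y" using u_Cout[OF d] h by (simp add: Cout_def d_def)
    thus ?thesis using K4[OF assms(2)] by simp
  next
    assume "\<exists>k. y = w d k"
    then obtain k where k: "y = w d (k mod 3)" using w_mod3[OF d] by metis
    have c1: "k mod 3 \<noteq> 1"
    proof
      assume "k mod 3 = 1"
      hence "Cout y = Cin x" using K6[OF d] k xu by simp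
      thus False using h by simp
    qed
    show ?thesis
    proof (cases "k mod 3 = 0")
      case True
      hence "(x,y) = A d 0" using k xu A_uw by metis
      thus ?thesis using A_in d by simp
    next
      case False
      hence "k mod 3 = 2" using c1 mod3_cases by blast
      hence "y = w d (- 1)" using k w_per[OF d, of "- 1" 1] by simp
      hence "(x,y) = psi (A d (- 1))" using psi_A[OF d, of "- 1"] xu by simp
      thus ?thesis using psi_in A_in d by simp
    qed
  qed
qed

end

context hat begin

lemma F_ne2: assumes "d \<in> Or" shows "F d p \<noteq> F d (p + 2)"
proof (cases "even p")
  case True
  then obtain k where k: "p = 2 * k" by (metis evenE)
  have "p + 2 = 2 * (k + 1)" using k by simp
  hence "F d p = u d k" "F d (p + 2) = u d (k + 1)" using k F_even by metis+
  moreover have "k mod 3 \<noteq> (k + 1) mod 3" by presburger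
  ultimately show ?thesis using u3[OF assms] by metis
next
  case False
  then obtain k where k: "p = 2 * k + 1" by (metis oddE)
  have "p + 2 = 2 * (k + 1) + 1" using k by simp
  hence "F d p = w d k" "F d (p + 2) = w d (k + 1)" using k F_odd by metis+
  moreover have "k mod 3 \<noteq> (k + 1) mod 3" by presburger
  ultimately show ?thesis using w3[OF assms] by metis
qed

lemma U: assumes "C \<in> alt_cycles G V E" shows "\<exists>d\<in>Or. C = Cyc d"
proof -
  obtain xs where xs: "C = cycle_edges xs" "is_cycle V E xs" "alternating Or xs"
    using assms unfolding alt_cycles_def Or_some by blast
  have "card (cycle_edges xs) = 6" using rad assms xs(1) by (simp add: has_radius_def)
  moreover have "card (cycle_edges xs) = length xs"
    using xs(2) by (intro card_cycle_edges) (auto simp: is_cycle_def)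
  ultimately have n6: "length xs = 6" by simp
  have dist: "distinct xs" using xs(2) by (simp add: is_cycle_def)
  define X where "X p = xs ! (p mod 6)" for p
  have mods: "(p mod 6 + 1) mod 6 = (p + 1) mod 6" "(p mod 6 + 2) mod 6 = (p + 2) mod 6" for p :: nat
    by (simp_all only: mod_add_left_eq)
  have altX: "((X p, X (p+1)) \<in> Or \<and> (X (p+2), X (p+1)) \<in> Or) \<or>
      ((X (p+1), X p) \<in> Or \<and> (X (p+1), X (p+2)) \<in> Or)" for p
  proof -
    have "p mod 6 < length xs" using n6 by simp
    hence "let a = xs ! (p mod 6); b = xs ! ((p mod 6 + 1) mod 6); c = xs ! ((p mod 6 + 2) mod 6) in
       ((a, b) \<in> Or \<and> (c, b) \<in> Or) \<or> ((b, a) \<in> Or \<and> (b, c) \<in> Or)"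
      using xs(3) n6 unfolding alternating_def Let_def by simp
    thus ?thesis unfolding X_def Let_def mods .
  qed
  have distX: "X p = X r \<Longrightarrow> p mod 6 = r mod 6" for p r
    using dist n6 nth_eq_iff_index_eq unfolding X_def by fastforce
  define q :: nat where "q = (if (X 0, X 1) \<in> Or then 0 else 1)"
  have q1: "q \<le> 1" using q_def by simp
  have dq: "(X q, X (q+1)) \<in> Or"
  proof (cases "(X 0, X 1) \<in> Or")
    case True thus ?thesis using q_def by simp
  next
    case False
    hence "(X 1, X 2) \<in> Or" using altX[of 0] by (simp add: numeral_2_eq_2)
    thus ?thesis using q_def False by (simp add: numeral_2_eq_2)
  qed
  define d where "d = (X q, X (q+1))"
  have d: "d \<in> Or" using dq d_def by simp
  have claim: "X (q + p) = F d (int p) \<and> X (q + p + 1) = F d (int p + 1)" for p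
  proof (induction p)
    case 0
    have "F d 0 = u d 0" "F d 1 = w d 0" using F_even[of d 0] F_odd[of d 0] by simp_all
    thus ?case by (simp add: u_def w_def d_def)
  next
    case (Suc p)
    have IH1: "X (q + p) = F d (int p)" and IH2: "X (q + p + 1) = F d (int p + 1)" using Suc by auto
    have cne: "X (q + p + 2) \<noteq> X (q + p)"
    proof
      assume "X (q + p + 2) = X (q + p)"
      hence "(q + p + 2) mod 6 = (q + p) mod 6" using distX by blast
      thus False by presburger
    qed
    have fne: "F d (int p + 2) \<noteq> F d (int p)" using F_ne2[OF d, of "int p"] by metis
    have a: "((X (q+p), X (q+p+1)) \<in> Or \<and> (X (q+p+2), X (q+p+1)) \<in> Or) \<or>
      ((X (q+p+1), X (q+p)) \<in> Or \<and> (X (q+p+1), X (q+p+2)) \<in> Or)"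
      using altX[of "q+p"] by (simp add: add.assoc)
    have "X (q + p + 2) = F d (int p + 2)"
    proof (cases "even (int p)")
      case True
      note fa = F_alt(1)[OF d True]
      hence "(X (q+p+1), X (q+p)) \<notin> Or" using IH1 IH2 O_anti by simp
      hence c: "(X (q+p+2), F d (int p + 1)) \<in> Or" using a IH2 by auto
      have "X (q+p+2) = F d (int p) \<or> X (q+p+2) = oin (F d (int p + 1)) (F d (int p))"
        using oin(3)[OF conjunct1[OF fa] c] .
      moreover have "F d (int p + 2) = F d (int p) \<or> F d (int p + 2) = oin (F d (int p + 1)) (F d (int p))"
        using oin(3)[OF conjunct1[OF fa] conjunct2[OF fa]] .
      ultimately show ?thesis using cne fne IH1 by metis
    next
      case False
      note fa = F_alt(2)[OF d False]
      hence "(X (q+p), X (q+p+1)) \<notin> Or" using IH1 IH2 O_anti by simp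
      hence c: "(F d (int p + 1), X (q+p+2)) \<in> Or" using a IH2 by auto
      have "X (q+p+2) = F d (int p) \<or> X (q+p+2) = oout (F d (int p + 1)) (F d (int p))"
        using oout(3)[OF conjunct1[OF fa] c] .
      moreover have "F d (int p + 2) = F d (int p) \<or> F d (int p + 2) = oout (F d (int p + 1)) (F d (int p))"
        using oout(3)[OF conjunct1[OF fa] conjunct2[OF fa]] .
      ultimately show ?thesis using cne fne IH1 by metis
    qed
    thus ?case using IH2 by (simp add: add.commute add.left_commute)
  qed
  have "cycle_edges xs = Cyc d"
    unfolding cycle_edges_def Cyc_def n6
  proof (rule equalityI; rule subsetI)
    fix e assume "e \<in> {{xs ! i, xs ! ((i + 1) mod 6)} |i. i < 6}"
    then obtain i where i: "i < 6" "e = {xs ! i, xs ! ((i + 1) mod 6)}" by blast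
    define p where "p = i + 6 - q"
    have qp: "q + p = i + 6" using p_def q1 by simp
    have "X (q + p) = xs ! i" using qp i(1) by (simp add: X_def)
    moreover have "X (q + p + 1) = xs ! ((i + 1) mod 6)"
    proof -
      have eq: "q + p + 1 = (i + 1) + 6" using qp by simp
      have "(q + p + 1) mod 6 = (i + 1) mod 6" unfolding eq by (rule mod_add_self2)
      thus ?thesis by (simp add: X_def)
    qed
    ultimately have "e = {F d (int p), F d (int p + 1)}" using claim[of p] i(2) by simp
    thus "e \<in> {{F d p, F d (p + 1)} |p. True}" by blast
  next
    fix e assume "e \<in> {{F d p, F d (p + 1)} |p. True}"
    then obtain r where r: "e = {F d r, F d (r + 1)}" by blast
    define p where "p = nat (r mod 6)"
    have ip: "int p = r mod 6" using p_def by simp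
    have f1: "F d r = F d (int p)" using F_mod6[OF d, of r] F_mod6[OF d, of "int p"] ip by simp
    have m1: "(r + 1) mod 6 = (int p + 1) mod 6" using ip by (simp add: mod_add_left_eq)
    have f2: "F d (r + 1) = F d (int p + 1)"
      using F_mod6[OF d, of "r+1"] F_mod6[OF d, of "int p + 1"] m1 by simp
    have c: "X (q + p) = F d (int p)" "X (q + p + 1) = F d (int p + 1)" using claim[of p] by auto
    have e: "e = {X (q + p), X (q + p + 1)}" unfolding c r f1 f2 ..
    define i where "i = (q + p) mod 6"
    have m: "(q + p + 1) mod 6 = ((q + p) mod 6 + 1) mod 6" by (simp only: mod_add_left_eq)
    have "X (q + p) = xs ! i" "X (q + p + 1) = xs ! ((i + 1) mod 6)"
      unfolding X_def i_def m by simp_all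
    hence e2: "e = {xs ! i, xs ! ((i + 1) mod 6)}" using e by simp
    have "i < 6" using i_def by simp
    thus "e \<in> {{xs ! i, xs ! ((i + 1) mod 6)} |i. i < 6}" using e2 by blast
  qed
  thus ?thesis using xs(1) d by blast
qed

end

context hat begin

definition Phi where "Phi v = (Cin v, Cout v)"

lemma Cin_alt: "v \<in> V \<Longrightarrow> Cin v \<in> alt_cycles G V E" using Cyc_alt ia_in by (simp add: Cin_def)
lemma Cout_alt: "v \<in> V \<Longrightarrow> Cout v \<in> alt_cycles G V E" using Cyc_alt oa_in by (simp add: Cout_def)

lemma arcs_iff: "X \<in> graph_arcs R \<longleftrightarrow> R (fst X) (snd X)" by (cases X) (simp add: graph_arcs_def)

lemma Phi_arc: assumes "v \<in> V" shows "Phi v \<in> graph_arcs (alt_adj G V E)"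
proof -
  have "v \<in> cycle_vertices (Cin v) \<inter> cycle_vertices (Cout v)" using in_Cin in_Cout assms by blast
  thus ?thesis using Cin_alt Cout_alt K4 assms by (auto simp: arcs_iff Phi_def alt_adj_def)
qed

lemma Phi_inj: assumes "x \<in> V" "y \<in> V" "Phi x = Phi y" shows "x = y"
proof -
  define d where "d = oa x"
  have d: "d \<in> Or" using oa_in assms d_def by simp
  have e: "Cin x = Cin y" "Cout x = Cout y" using assms(3) by (auto simp: Phi_def)
  have "y \<in> cycle_vertices (Cyc d)" using in_Cout[OF assms(2)] e d_def by (simp add: Cout_def)
  hence "(\<exists>k. y = u d k) \<or> (\<exists>k. y = w d k)" using Cyc_V_cases by blast
  thus ?thesis
  proof
    assume "\<exists>k. y = w d k"
    then obtain k where "y = w d k" by blast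
    hence "Cin y = Cout y" using w_Cin[OF d] e d_def by (simp add: Cout_def)
    thus ?thesis using K4[OF assms(2)] by simp
  next
    assume "\<exists>k. y = u d k"
    then obtain k where k: "y = u d (k mod 3)" using u_mod3[OF d] by metis
    have xu: "x = u d 0" by (simp add: u_def d_def)
    have "k mod 3 = 0 \<or> k mod 3 = 1 \<or> k mod 3 = 2" by (rule mod3_cases)
    thus ?thesis
    proof (elim disjE)
      assume "k mod 3 = 0" thus ?thesis using k xu by simp
    next
      assume "k mod 3 = 1" thus ?thesis using k xu e K6c1[OF d] by simp
    next
      assume "k mod 3 = 2" thus ?thesis using k xu e K6c2[OF d] by simp
    qed
  qed
qed

lemma Phi_surj: assumes "X \<in> graph_arcs (alt_adj G V E)" shows "\<exists>v\<in>V. Phi v = X"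
proof -
  obtain C D where X: "X = (C, D)" by (cases X)
  have a: "alt_adj G V E C D" using assms X by (simp add: graph_arcs_def)
  hence CD: "C \<in> alt_cycles G V E" "D \<in> alt_cycles G V E" "C \<noteq> D"
    "cycle_vertices C \<inter> cycle_vertices D \<noteq> {}" by (auto simp: alt_adj_def)
  obtain d1 where d1: "d1 \<in> Or" "C = Cyc d1" using U CD(1) by blast
  obtain d2 where d2: "d2 \<in> Or" "D = Cyc d2" using U CD(2) by blast
  obtain x where x: "x \<in> cycle_vertices C" "x \<in> cycle_vertices D" using CD(4) by blast
  have xV: "x \<in> V" using x(1) d1 Cyc_V' by blast
  have c1: "C = Cin x \<or> C = Cout x" using in_Cyc[OF d1(1)] x(1) d1(2) by simp
  have c2: "D = Cin x \<or> D = Cout x" using in_Cyc[OF d2(1)] x(2) d2(2) by simp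
  show ?thesis
  proof (cases "C = Cin x")
    case True
    hence "D = Cout x" using c2 CD(3) by auto
    thus ?thesis using True xV X by (auto simp: Phi_def)
  next
    case False
    hence cx: "C = Cout x" "D = Cin x" using c1 c2 CD(3) by auto
    define e where "e = ia x"
    have e: "e \<in> Or" using ia_in xV e_def by simp
    have xw: "x = w e 0" by (simp add: w_def e_def)
    have "Cout (u e (- 1)) = Cyc e" using u_Cout[OF e] .
    moreover have "Cyc e = D" using cx e_def by (simp add: Cin_def)
    moreover have "Cin (u e (- 1)) = C" using K6g[OF e, of "- 1"] xw cx by simp
    ultimately have "Phi (u e (- 1)) = X" using X by (simp add: Phi_def)
    thus ?thesis using uw_V[OF e] by blast
  qed
qed

lemma Phi_bij: "bij_betw Phi V (graph_arcs (alt_adj G V E))"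
  unfolding bij_betw_def
proof
  show "inj_on Phi V" using Phi_inj by (meson inj_onI)
  show "Phi ` V = graph_arcs (alt_adj G V E)" using Phi_arc Phi_surj by blast
qed

definition Psi where "Psi = inv_into V Phi"

lemma Psi: assumes "X \<in> graph_arcs (alt_adj G V E)" shows "Psi X \<in> V" "Phi (Psi X) = X"
proof -
  have "X \<in> Phi ` V" using Phi_bij assms by (simp add: bij_betw_def)
  thus "Psi X \<in> V" "Phi (Psi X) = X" by (auto simp: Psi_def inv_into_into f_inv_into_f)
qed

lemma Psi_Cin: "X \<in> graph_arcs (alt_adj G V E) \<Longrightarrow> Cin (Psi X) = fst X"
  using Psi(2) by (metis Phi_def fst_conv)
lemma Psi_Cout: "X \<in> graph_arcs (alt_adj G V E) \<Longrightarrow> Cout (Psi X) = snd X"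
  using Psi(2) by (metis Phi_def snd_conv)

lemma E_Or: assumes "x \<in> V" "y \<in> V" shows "E x y \<longleftrightarrow> (x,y) \<in> Or \<or> (y,x) \<in> Or"
proof
  assume "E x y" thus "(x,y) \<in> Or \<or> (y,x) \<in> Or" using O_total by blast
next
  assume "(x,y) \<in> Or \<or> (y,x) \<in> Or"
  thus "E x y"
  proof
    assume "(y,x) \<in> Or" hence "E y x" by (rule O_E')
    thus "E x y" using E_V by blast
  qed (rule O_E')
qed

theorem main:
  shows "(\<forall>x y z x' y' z'. two_arc (alt_adj G V E) x y z \<and> two_arc (alt_adj G V E) x' y' z' \<longrightarrow>
            (\<exists>g\<in>G. cyc_act g x = x' \<and> cyc_act g y = y' \<and> cyc_act g z = z'))
       \<and> (\<exists>\<Psi> Ori. bij_betw \<Psi> (graph_arcs (alt_adj G V E)) V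
            \<and> (\<forall>x\<in>graph_arcs (alt_adj G V E). \<forall>y\<in>graph_arcs (alt_adj G V E).
                 dart_adj (alt_adj G V E) x y \<longleftrightarrow> E (\<Psi> x) (\<Psi> y))
            \<and> G_orientation G V E Ori
            \<and> (\<forall>x y. dart_oriented (alt_adj G V E) x y \<longrightarrow> (\<Psi> x, \<Psi> y) \<in> Ori))"
proof (intro conjI allI impI)
  let ?R = "alt_adj G V E"
  have orient: "(Psi X, Psi Y) \<in> Or" if "X \<in> graph_arcs ?R" "Y \<in> graph_arcs ?R"
    "fst Y = snd X" "fst X \<noteq> snd Y" for X Y
    using P[OF Psi(1)[OF that(1)] Psi(1)[OF that(2)]] Psi_Cin[OF that(1)] Psi_Cin[OF that(2)]
      Psi_Cout[OF that(1)] Psi_Cout[OF that(2)] that(3,4) by simp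
  fix x y z x' y' z'
  assume h: "two_arc ?R x y z \<and> two_arc ?R x' y' z'"
  have arcs: "(x,y) \<in> graph_arcs ?R" "(y,z) \<in> graph_arcs ?R" "x \<noteq> z"
    "(x',y') \<in> graph_arcs ?R" "(y',z') \<in> graph_arcs ?R" "x' \<noteq> z'"
    using h by (auto simp: two_arc_def graph_arcs_def)
  have o1: "(Psi (x,y), Psi (y,z)) \<in> Or" using orient[OF arcs(1,2)] arcs(3) by simp
  have o2: "(Psi (x',y'), Psi (y',z')) \<in> Or" using orient[OF arcs(4,5)] arcs(6) by simp
  obtain g where g: "g \<in> G" "act g (Psi (x,y), Psi (y,z)) = (Psi (x',y'), Psi (y',z'))"
    using O_trans[OF o1 o2] by blast
  have gv: "g (Psi (x,y)) = Psi (x',y')" "g (Psi (y,z)) = Psi (y',z')" using g(2) by (simp_all add: act_def)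
  have V1: "Psi (x,y) \<in> V" "Psi (y,z) \<in> V" using Psi(1) arcs by blast+
  have "cyc_act g x = x'"
    using Cin_act[OF g(1) V1(1)] gv(1) Psi_Cin[OF arcs(1)] Psi_Cin[OF arcs(4)] by simp
  moreover have "cyc_act g y = y'"
    using Cout_act[OF g(1) V1(1)] gv(1) Psi_Cout[OF arcs(1)] Psi_Cout[OF arcs(4)] by simp
  moreover have "cyc_act g z = z'"
    using Cout_act[OF g(1) V1(2)] gv(2) Psi_Cout[OF arcs(2)] Psi_Cout[OF arcs(5)] by simp
  ultimately show "\<exists>g\<in>G. cyc_act g x = x' \<and> cyc_act g y = y' \<and> cyc_act g z = z'" using g(1) by blast
next
  let ?R = "alt_adj G V E"
  have orient: "(Psi X, Psi Y) \<in> Or" if "X \<in> graph_arcs ?R" "Y \<in> graph_arcs ?R"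
    "fst Y = snd X" "fst X \<noteq> snd Y" for X Y
    using P[OF Psi(1)[OF that(1)] Psi(1)[OF that(2)]] Psi_Cin[OF that(1)] Psi_Cin[OF that(2)]
      Psi_Cout[OF that(1)] Psi_Cout[OF that(2)] that(3,4) by simp
  have b: "bij_betw Psi (graph_arcs ?R) V" unfolding Psi_def by (rule bij_betw_inv_into[OF Phi_bij])
  have adj: "\<forall>X\<in>graph_arcs ?R. \<forall>Y\<in>graph_arcs ?R. dart_adj ?R X Y \<longleftrightarrow> E (Psi X) (Psi Y)"
  proof (intro ballI)
    fix X Y assume XY: "X \<in> graph_arcs ?R" "Y \<in> graph_arcs ?R"
    have V2: "Psi X \<in> V" "Psi Y \<in> V" using Psi(1) XY by blast+
    have "dart_adj ?R X Y \<longleftrightarrow> (fst Y = snd X \<and> fst X \<noteq> snd Y) \<or> (fst X = snd Y \<and> fst Y \<noteq> snd X)"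
      using XY by (simp add: dart_adj_def arcs_iff)
    also have "\<dots> \<longleftrightarrow> (Psi X, Psi Y) \<in> Or \<or> (Psi Y, Psi X) \<in> Or"
      using P[OF V2(1) V2(2)] P[OF V2(2) V2(1)] Psi_Cin[OF XY(1)] Psi_Cin[OF XY(2)]
        Psi_Cout[OF XY(1)] Psi_Cout[OF XY(2)] by auto
    also have "\<dots> \<longleftrightarrow> E (Psi X) (Psi Y)" using E_Or V2 by simp
    finally show "dart_adj ?R X Y \<longleftrightarrow> E (Psi X) (Psi Y)" .
  qed
  have go: "G_orientation G V E Or"
    unfolding G_orientation_def
  proof
    show "a0 \<in> graph_arcs E" using a0_arc by (simp add: arcs_iff)
    show "Or = arc_orbit G a0" by (simp add: Or_def some_orientation_def a0_def)
  qed
  have "\<forall>X Y. dart_oriented ?R X Y \<longrightarrow> (Psi X, Psi Y) \<in> Or"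
  proof (intro allI impI)
    fix X Y assume "dart_oriented ?R X Y"
    hence "?R (fst X) (snd X) \<and> ?R (fst Y) (snd Y) \<and> fst Y = snd X \<and> fst X \<noteq> snd Y"
      unfolding dart_oriented_def .
    hence "X \<in> graph_arcs ?R" "Y \<in> graph_arcs ?R" "fst Y = snd X" "fst X \<noteq> snd Y"
      unfolding arcs_iff by blast+
    thus "(Psi X, Psi Y) \<in> Or" using orient by blast
  qed
  thus "\<exists>\<Psi> Ori. bij_betw \<Psi> (graph_arcs ?R) V
            \<and> (\<forall>x\<in>graph_arcs ?R. \<forall>y\<in>graph_arcs ?R. dart_adj ?R x y \<longleftrightarrow> E (\<Psi> x) (\<Psi> y))
            \<and> G_orientation G V E Ori
            \<and> (\<forall>x y. dart_oriented ?R x y \<longrightarrow> (\<Psi> x, \<Psi> y) \<in> Ori)"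
    using b adj go by blast
qed

end

theorem proposition2p3:
  fixes V :: "'a set" and E :: "'a \<Rightarrow> 'a \<Rightarrow> bool" and G :: "('a \<Rightarrow> 'a) set"
  assumes "simple_graph V E" and "connected_graph V E" and "tetravalent V E"
    and "aut_subgroup G V E" and "half_arc_transitive G V E"
    and "has_radius G V E 3" and "has_attachment G V E 2"
  shows "(\<forall>x y z x' y' z'. two_arc (alt_adj G V E) x y z \<and> two_arc (alt_adj G V E) x' y' z' \<longrightarrow>
            (\<exists>g\<in>G. cyc_act g x = x' \<and> cyc_act g y = y' \<and> cyc_act g z = z'))
       \<and> (\<exists>\<Psi> Ori. bij_betw \<Psi> (graph_arcs (alt_adj G V E)) V
            \<and> (\<forall>x\<in>graph_arcs (alt_adj G V E). \<forall>y\<in>graph_arcs (alt_adj G V E).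
                 dart_adj (alt_adj G V E) x y \<longleftrightarrow> E (\<Psi> x) (\<Psi> y))
            \<and> G_orientation G V E Ori
            \<and> (\<forall>x y. dart_oriented (alt_adj G V E) x y \<longrightarrow> (\<Psi> x, \<Psi> y) \<in> Ori))"
proof -
  interpret hat V E G using assms by (unfold_locales)
  show ?thesis by (rule main)
qed

end
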